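(* Let $p$ be an odd prime. For all $x\in\mathbb C_p$ with $|x|_p>1$: (1) $G_{p,E}(1-x)+G_{p,E}(x)=0$; (2) $G_{p,E}(x)-G_{p,E}(-x)=2x(\log_p(x)-1)$; (3) $G_{p,E}(1+x)+G_{p,E}(x)=2x(\log_p(x)-1)$.
   Context: $|\cdot|_p$ is the absolute value on $\mathbb C_p$ with $|p|_p=p^{-1}$, and $\log_p$ is Iwasawa's $p$-adic logarithm. For $x\in\mathbb C_p$ with $|x|_p>1$, $G_{p,E}(x)=\lim_{N\to\infty}\sum_{a=0}^{p^N-1}\{(x+a)\log_p(x+a)-(x+a)\}(-1)^a$. *)

theory Defs
  imports Complex_Main "HOL-Computational_Algebra.Polynomial"
begin

text \<open>We model C_p axiomatically: a field of characteristic 0 with an absolute value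
  av that is non-archimedean, normalised by av p = 1/p, complete, algebraically closed,
  and in which the algebraic numbers (over Q) are dense.  These properties characterise
  C_p up to isometric isomorphism.\<close>

definition av_conv :: "('a::field \<Rightarrow> real) \<Rightarrow> (nat \<Rightarrow> 'a) \<Rightarrow> 'a \<Rightarrow> bool" where
  "av_conv av s L \<longleftrightarrow> (\<forall>e>0. \<exists>N. \<forall>n\<ge>N. av (s n - L) < e)"

definition av_cauchy :: "('a::field \<Rightarrow> real) \<Rightarrow> (nat \<Rightarrow> 'a) \<Rightarrow> bool" where
  "av_cauchy av s \<longleftrightarrow> (\<forall>e>0. \<exists>N. \<forall>m\<ge>N. \<forall>n\<ge>N. av (s m - s n) < e)"

definition algebraic_over_Q :: "'a::field_char_0 \<Rightarrow> bool" where
  "algebraic_over_Q y \<longleftrightarrow> (\<exists>q :: int poly. q \<noteq> 0 \<and> poly (map_poly of_int q) y = 0)"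

definition is_Cp :: "nat \<Rightarrow> ('a::field_char_0 \<Rightarrow> real) \<Rightarrow> bool" where
  "is_Cp p av \<longleftrightarrow>
     prime p \<and>
     (\<forall>x. av x \<ge> 0) \<and> (\<forall>x. av x = 0 \<longleftrightarrow> x = 0) \<and>
     (\<forall>x y. av (x * y) = av x * av y) \<and>
     (\<forall>x y. av (x + y) \<le> max (av x) (av y)) \<and>
     av (of_nat p) = 1 / real p \<and>
     (\<forall>s. av_cauchy av s \<longrightarrow> (\<exists>L. av_conv av s L)) \<and>
     (\<forall>q :: 'a poly. degree q \<ge> 1 \<longrightarrow> (\<exists>z. poly q z = 0)) \<and>
     (\<forall>x e. e > 0 \<longrightarrow> (\<exists>y. algebraic_over_Q y \<and> av (x - y) < e))"

text \<open>Iwasawa's p-adic logarithm: the unique map that is a homomorphism C_p^* \<rightarrow> (C_p,+),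
  vanishes at p, agrees with the power series of log(1+z) on the open unit disc;
  we set its (irrelevant) value at 0 to be 0.\<close>

definition is_iwasawa_log :: "nat \<Rightarrow> ('a::field_char_0 \<Rightarrow> real) \<Rightarrow> ('a \<Rightarrow> 'a) \<Rightarrow> bool" where
  "is_iwasawa_log p av f \<longleftrightarrow>
     f 0 = 0 \<and>
     (\<forall>x y. x \<noteq> 0 \<longrightarrow> y \<noteq> 0 \<longrightarrow> f (x * y) = f x + f y) \<and>
     f (of_nat p) = 0 \<and>
     (\<forall>z. av z < 1 \<longrightarrow>
        av_conv av (\<lambda>n. \<Sum>k=1..n. (-1) ^ (k + 1) * z ^ k / of_nat k) (f (1 + z)))"

definition log_p :: "nat \<Rightarrow> ('a::field_char_0 \<Rightarrow> real) \<Rightarrow> 'a \<Rightarrow> 'a" where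
  "log_p p av = (THE f. is_iwasawa_log p av f)"

definition av_lim :: "('a::field \<Rightarrow> real) \<Rightarrow> (nat \<Rightarrow> 'a) \<Rightarrow> 'a" where
  "av_lim av s = (THE L. av_conv av s L)"

definition G_pE :: "nat \<Rightarrow> ('a::field_char_0 \<Rightarrow> real) \<Rightarrow> 'a \<Rightarrow> 'a" where
  "G_pE p av x = av_lim av (\<lambda>N. \<Sum>a<p ^ N.
      ((x + of_nat a) * log_p p av (x + of_nat a) - (x + of_nat a)) * (-1) ^ a)"

end

theory Submission
  imports Defs
begin

locale cp =
  fixes p :: nat and av :: "'a::field_char_0 \<Rightarrow> real"
  assumes cp: "is_Cp p av"
begin

lemma prime_p: "prime p" using cp unfolding is_Cp_def by blast
lemma p_gt1: "p > 1" using prime_p prime_gt_1_nat by blast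
lemma av_nonneg: "av x \<ge> 0" using cp unfolding is_Cp_def by blast
lemma av_zero_iff[simp]: "av x = 0 \<longleftrightarrow> x = 0" using cp unfolding is_Cp_def by blast
lemma av_mult: "av (x * y) = av x * av y" using cp unfolding is_Cp_def by blast
lemma av_ultra: "av (x + y) \<le> max (av x) (av y)" using cp unfolding is_Cp_def by blast
lemma av_p: "av (of_nat p) = 1 / real p" using cp unfolding is_Cp_def by blast
lemma complete: "av_cauchy av s \<Longrightarrow> \<exists>L. av_conv av s L" using cp unfolding is_Cp_def by blast
lemma dense: "e > 0 \<Longrightarrow> \<exists>y. algebraic_over_Q y \<and> av (x - y) < e" using cp unfolding is_Cp_def by blast

lemma av_0[simp]: "av 0 = 0" by simp

lemma av_1[simp]: "av 1 = 1"
proof -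
  have "av 1 = av 1 * av 1" using av_mult[of 1 1] by simp
  moreover have "av 1 \<noteq> 0" by simp
  ultimately show ?thesis by (metis mult_cancel_left1)
qed

lemma av_m1[simp]: "av (-1) = 1"
proof -
  have "av (-1) * av (-1) = 1" using av_mult[of "-1" "-1"] by simp
  then show ?thesis using av_nonneg[of "-1"]
    by (metis abs_of_nonneg abs_square_eq_1 power2_eq_square)
qed

lemma av_uminus[simp]: "av (- x) = av x"
  using av_mult[of "-1" x] by simp

lemma av_sub_comm: "av (x - y) = av (y - x)"
  by (metis av_uminus minus_diff_eq)

lemma av_pos: "x \<noteq> 0 \<Longrightarrow> av x > 0"
  using av_nonneg[of x] av_zero_iff[of x] by linarith

lemma av_inverse: "av (inverse x) = inverse (av x)"
proof (cases "x = 0")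
  case False
  then have "av x * av (inverse x) = 1" using av_mult[of x "inverse x"] by simp
  then show ?thesis by (metis inverse_unique)
qed simp

lemma av_divide: "av (x / y) = av x / av y"
  by (simp add: divide_inverse av_mult av_inverse)

lemma av_power: "av (x ^ n) = av x ^ n"
  by (induction n) (simp_all add: av_mult)

lemma av_diff: "av (x - y) \<le> max (av x) (av y)"
  using av_ultra[of x "-y"] by simp

lemma av_add_eq: "av y < av x \<Longrightarrow> av (x + y) = av x"
proof -
  assume a: "av y < av x"
  have 1: "av (x + y) \<le> av x" using av_ultra[of x y] a by simp
  have "av x \<le> max (av (x + y)) (av y)" using av_ultra[of "x+y" "-y"] by simp
  then have "av x \<le> av (x + y)" using a by linarith
  with 1 show ?thesis by simp
qed

lemma av_sum_le:
  assumes "finite A" "\<And>i. i \<in> A \<Longrightarrow> av (f i) \<le> B" "B \<ge> 0"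
  shows "av (sum f A) \<le> B"
  using assms
proof (induction A rule: finite_induct)
  case (insert a A)
  have h1: "av (f a) \<le> B" using insert by simp
  have h2: "av (sum f A) \<le> B" using insert by simp
  have "av (f a + sum f A) \<le> B" using av_ultra[of "f a" "sum f A"] h1 h2 by (simp add: max_def split: if_splits)
  then show ?case using insert(1,2) by simp
qed simp

lemma av_sum_less:
  assumes "finite A" "\<And>i. i \<in> A \<Longrightarrow> av (f i) < B" "B > 0"
  shows "av (sum f A) < B"
  using assms
proof (induction A rule: finite_induct)
  case (insert a A)
  have h1: "av (f a) < B" using insert by simp
  have h2: "av (sum f A) < B" using insert by simp
  have "av (f a + sum f A) < B" using av_ultra[of "f a" "sum f A"] h1 h2 by (simp add: max_def split: if_splits)
  then show ?case using insert(1,2) by simp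
qed simp

lemma av_of_nat_le1: "av (of_nat n) \<le> 1"
proof (induction n)
  case (Suc n)
  then show ?case using av_ultra[of 1 "of_nat n"] by simp
qed simp

lemma av_of_int_le1: "av (of_int n) \<le> 1"
proof (cases "n \<ge> 0")
  case True
  then show ?thesis using av_of_nat_le1[of "nat n"] by simp
next
  case False
  then have "of_int n = - (of_nat (nat (-n)) :: 'a)" by simp
  then show ?thesis using av_of_nat_le1[of "nat (-n)"] by simp
qed

lemma av_p_dvd: "int p dvd n \<Longrightarrow> av (of_int n) \<le> 1 / real p"
proof -
  assume "int p dvd n"
  then obtain k where "n = int p * k" by auto
  then have "av (of_int n) = av (of_nat p) * av (of_int k)" by (simp add: av_mult)
  also have "\<dots> \<le> 1 / real p" using av_p av_of_int_le1[of k] p_gt1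
    by (simp add: divide_right_mono)
  finally show ?thesis .
qed

lemma av_coprime: "\<not> int p dvd n \<Longrightarrow> av (of_int n) = 1"
proof -
  assume nd: "\<not> int p dvd n"
  have "coprime (int p) n" using nd prime_p
    by (simp add: prime_imp_coprime_int prime_nat_iff_prime)
  then obtain a b where ab: "a * int p + b * n = 1"
    by (metis bezout_int coprime_iff_gcd_eq_1)
  have "1 = av (of_int (a * int p + b * n) :: 'a)" using ab by simp
  also have "\<dots> \<le> max (av (of_int (a * int p) :: 'a)) (av (of_int (b * n) :: 'a))"
    using av_ultra by (metis of_int_add)
  also have "av (of_int (a * int p) :: 'a) \<le> 1 / real p" by (rule av_p_dvd) simp
  also have "av (of_int (b * n) :: 'a) = av (of_int b :: 'a) * av (of_int n)" by (simp add: av_mult)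
  also have "\<dots> \<le> av (of_int n)" using av_of_int_le1[of b] av_nonneg[of "of_int n"]
    using mult_right_mono[OF av_of_int_le1 av_nonneg, of b "of_int n"] by simp
  finally have "1 \<le> max (1 / real p) (av (of_int n :: 'a))"
    by (meson max.mono order_refl order_trans)
  moreover have "1 / real p < 1" using p_gt1 by simp
  ultimately have "1 \<le> av (of_int n :: 'a)" by linarith
  with av_of_int_le1[of n] show ?thesis by simp
qed

lemma av_of_nat_ge: "n \<ge> 1 \<Longrightarrow> av (of_nat n :: 'a) \<ge> 1 / real n"
proof (induction n rule: less_induct)
  case (less n)
  show ?case
  proof (cases "p dvd n")
    case True
    then obtain m where m: "n = p * m" by auto
    then have "m \<ge> 1" using less.prems by (cases m) auto
    have "m < n" using m p_gt1 \<open>m \<ge> 1\<close> by simp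
    then have ih: "av (of_nat m :: 'a) \<ge> 1 / real m" using less.IH \<open>m \<ge> 1\<close> by blast
    have "av (of_nat n :: 'a) = av (of_nat m) / real p" using m av_p by (simp add: av_mult)
    also have "\<dots> \<ge> (1 / real m) / real p" using ih p_gt1 by (intro divide_right_mono) auto
    finally show ?thesis using m by (simp add: mult.commute)
  next
    case False
    then have "\<not> int p dvd int n" by simp
    then have "av (of_int (int n) :: 'a) = 1" by (rule av_coprime)
    then show ?thesis using less.prems by simp
  qed
qed

lemma av_of_int_form: "n \<noteq> 0 \<Longrightarrow> \<exists>k::nat. av (of_int n :: 'a) = 1 / real p ^ k"
proof (induction "nat \<bar>n\<bar>" arbitrary: n rule: less_induct)
  case less
  show ?case
  proof (cases "int p dvd n")
    case True
    then obtain m where m: "n = int p * m" by auto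
    then have "m \<noteq> 0" using less.prems by auto
    have "nat \<bar>m\<bar> < nat \<bar>n\<bar>" using m p_gt1 \<open>m \<noteq> 0\<close>
      by (simp add: abs_mult nat_mult_distrib)
    then obtain k where k: "av (of_int m :: 'a) = 1 / real p ^ k" using less.hyps \<open>m \<noteq> 0\<close> by blast
    have "av (of_int n :: 'a) = av (of_nat p :: 'a) * av (of_int m :: 'a)" using m by (simp add: av_mult)
    also have "\<dots> = 1 / real p ^ Suc k" using k av_p by simp
    finally show ?thesis by blast
  next
    case False
    then show ?thesis using av_coprime[of n] by (intro exI[of _ 0]) simp
  qed
qed

end

context cp begin

lemma conv_unique: "av_conv av s L \<Longrightarrow> av_conv av s L' \<Longrightarrow> L = L'"
proof (rule ccontr)
  assume c1: "av_conv av s L" and c2: "av_conv av s L'" and ne: "L \<noteq> L'"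
  define e where "e = av (L - L')"
  have e: "e > 0" using ne av_pos[of "L - L'"] e_def by simp
  obtain N1 where N1: "\<forall>n\<ge>N1. av (s n - L) < e" using c1 e unfolding av_conv_def by blast
  obtain N2 where N2: "\<forall>n\<ge>N2. av (s n - L') < e" using c2 e unfolding av_conv_def by blast
  define n where "n = max N1 N2"
  have "L - L' = - (s n - L) + (s n - L')" by simp
  then have "e \<le> max (av (s n - L)) (av (s n - L'))" using av_ultra e_def by (metis av_uminus)
  moreover have "av (s n - L) < e" "av (s n - L') < e" using N1 N2 n_def by auto
  ultimately show False by (simp add: max_def split: if_splits)
qed

lemma av_lim_eq: "av_conv av s L \<Longrightarrow> av_lim av s = L"
  unfolding av_lim_def using conv_unique by blast

lemma conv_const: "av_conv av (\<lambda>n. c) c"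
  unfolding av_conv_def by simp

lemma conv_add: "av_conv av s L \<Longrightarrow> av_conv av t M \<Longrightarrow> av_conv av (\<lambda>n. s n + t n) (L + M)"
  unfolding av_conv_def
proof (intro allI impI)
  fix e :: real assume a: "\<forall>e>0. \<exists>N. \<forall>n\<ge>N. av (s n - L) < e" "\<forall>e>0. \<exists>N. \<forall>n\<ge>N. av (t n - M) < e" "e > 0"
  obtain N1 where N1: "\<forall>n\<ge>N1. av (s n - L) < e" using a by blast
  obtain N2 where N2: "\<forall>n\<ge>N2. av (t n - M) < e" using a by blast
  show "\<exists>N. \<forall>n\<ge>N. av (s n + t n - (L + M)) < e"
  proof (intro exI allI impI)
    fix n assume "n \<ge> max N1 N2"
    then have "av (s n - L) < e" "av (t n - M) < e" using N1 N2 by auto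
    then have h: "av ((s n - L) + (t n - M)) < e" using av_ultra[of "s n - L" "t n - M"]
      by (simp add: max_def split: if_splits)
    have eq: "s n + t n - (L + M) = (s n - L) + (t n - M)" by simp
    show "av (s n + t n - (L + M)) < e" unfolding eq using h .
  qed
qed

lemma conv_cmult: "av_conv av s L \<Longrightarrow> av_conv av (\<lambda>n. c * s n) (c * L)"
proof (cases "c = 0")
  case True then show ?thesis by (simp add: conv_const)
next
  case False
  assume a: "av_conv av s L"
  show ?thesis unfolding av_conv_def
  proof (intro allI impI)
    fix e :: real assume e: "e > 0"
    have "e / av c > 0" using e False av_pos by simp
    then obtain N where N: "\<forall>n\<ge>N. av (s n - L) < e / av c" using a unfolding av_conv_def by blast
    show "\<exists>N. \<forall>n\<ge>N. av (c * s n - c * L) < e"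
    proof (intro exI allI impI)
      fix n assume "n \<ge> N"
      then have "av (s n - L) < e / av c" using N by blast
      then have "av c * av (s n - L) < e" using av_pos[OF False] by (simp add: field_simps)
      moreover have "c * s n - c * L = c * (s n - L)" by (simp add: algebra_simps)
      ultimately show "av (c * s n - c * L) < e" by (simp add: av_mult)
    qed
  qed
qed

lemma conv_null_iff: "av_conv av s L \<longleftrightarrow> av_conv av (\<lambda>n. s n - L) 0"
  unfolding av_conv_def by simp

lemma conv_diff: "av_conv av s L \<Longrightarrow> av_conv av t M \<Longrightarrow> av_conv av (\<lambda>n. s n - t n) (L - M)"
  using conv_add[of s L "\<lambda>n. -1 * t n" "-1 * M"] conv_cmult[of t M "-1"] by simp

lemma conv_eventually:
  assumes "av_conv av s L" "\<forall>n\<ge>N. t n = s n"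
  shows "av_conv av t L"
  unfolding av_conv_def
proof (intro allI impI)
  fix e :: real assume "e > 0"
  then obtain N1 where "\<forall>n\<ge>N1. av (s n - L) < e" using assms(1) unfolding av_conv_def by blast
  then show "\<exists>N. \<forall>n\<ge>N. av (t n - L) < e" using assms(2) by (intro exI[of _ "max N N1"]) auto
qed

lemma conv_real_null:
  assumes "\<forall>n\<ge>N. av (d n) \<le> b n" "b \<longlonglongrightarrow> 0"
  shows "av_conv av d 0"
  unfolding av_conv_def
proof (intro allI impI)
  fix e :: real assume e: "e > 0"
  then obtain N1 where N1: "\<forall>n\<ge>N1. norm (b n - 0) < e" using assms(2) LIMSEQ_iff by blast
  show "\<exists>N. \<forall>n\<ge>N. av (d n - 0) < e"
  proof (intro exI allI impI)
    fix n assume "n \<ge> max N N1"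
    then have "av (d n) \<le> b n" "\<bar>b n\<bar> < e" using assms(1) N1 by auto
    then show "av (d n - 0) < e" by simp
  qed
qed

lemma conv_bounded: "av_conv av s L \<Longrightarrow> \<exists>N B. B > 0 \<and> (\<forall>n\<ge>N. av (s n) \<le> B)"
proof -
  assume "av_conv av s L"
  then obtain N where N: "\<forall>n\<ge>N. av (s n - L) < 1" unfolding av_conv_def by fastforce
  have "\<forall>n\<ge>N. av (s n) \<le> max (av L) 1"
  proof (intro allI impI)
    fix n assume "n \<ge> N"
    then have "av (s n - L) < 1" using N by blast
    moreover have "s n = L + (s n - L)" by simp
    ultimately show "av (s n) \<le> max (av L) 1" using av_ultra[of L "s n - L"]
      by (smt (verit) max.cobounded1 max.cobounded2)
  qed
  then show ?thesis by (intro exI[of _ N] exI[of _ "max (av L) 1"]) auto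
qed

lemma conv_mult_null:
  assumes "av_conv av s L" "av_conv av t 0"
  shows "av_conv av (\<lambda>n. s n * t n) 0"
  unfolding av_conv_def
proof (intro allI impI)
  fix e :: real assume e: "e > 0"
  obtain N B where NB: "B > 0" "\<forall>n\<ge>N. av (s n) \<le> B" using conv_bounded[OF assms(1)] by blast
  obtain N1 where N1: "\<forall>n\<ge>N1. av (t n - 0) < e / B" using assms(2) e NB(1) unfolding av_conv_def
    by (meson divide_pos_pos)
  show "\<exists>N. \<forall>n\<ge>N. av (s n * t n - 0) < e"
  proof (intro exI allI impI)
    fix n assume n: "n \<ge> max N N1"
    then have a: "av (s n) \<le> B" "av (t n) < e / B" using NB N1 by auto
    have "av (s n) * av (t n) \<le> B * av (t n)" using a(1) av_nonneg by (simp add: mult_right_mono)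
    also have "\<dots> < B * (e / B)" using a(2) NB(1) by (metis mult_strict_left_mono)
    finally show "av (s n * t n - 0) < e" using NB(1) by (simp add: av_mult)
  qed
qed

lemma conv_limit_bound:
  assumes "av_conv av s L" "\<forall>n\<ge>N. av (s n) \<le> B"
  shows "av L \<le> B"
proof (rule ccontr)
  assume c: "\<not> av L \<le> B"
  have B0: "B \<ge> 0" using assms(2) av_nonneg order_trans by blast
  then have "av L > 0" using c by simp
  then obtain N1 where N1: "\<forall>n\<ge>N1. av (s n - L) < av L" using assms(1) unfolding av_conv_def by blast
  define n where "n = max N N1"
  have "av (s n - L) < av L" "av (s n) \<le> B" using N1 assms(2) n_def by auto
  moreover have "L = s n - (s n - L)" by simp
  ultimately have "av L \<le> max (av (s n)) (av (s n - L))" using av_diff by metis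
  then show False using \<open>av (s n - L) < av L\<close> \<open>av (s n) \<le> B\<close> c by (simp add: max_def split: if_splits)
qed

lemma cauchy_succ:
  assumes "\<forall>e>0. \<exists>N. \<forall>n\<ge>N. av (s (Suc n) - s n) < e"
  shows "\<exists>L. av_conv av s L"
proof (rule complete)
  show "av_cauchy av s" unfolding av_cauchy_def
  proof (intro allI impI)
    fix e :: real assume e: "e > 0"
    then obtain N where N: "\<forall>n\<ge>N. av (s (Suc n) - s n) < e" using assms by blast
    have key: "\<forall>m. av (s (n + m) - s n) < e" if "n \<ge> N" for n
    proof
      fix m show "av (s (n + m) - s n) < e"
      proof (induction m)
        case 0 then show ?case using e by simp
      next
        case (Suc m)
        have "s (n + Suc m) - s n = (s (Suc (n + m)) - s (n + m)) + (s (n + m) - s n)" by simp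
        moreover have "av (s (Suc (n + m)) - s (n + m)) < e" using N that by simp
        ultimately show ?case using Suc av_ultra[of "s (Suc (n + m)) - s (n + m)" "s (n + m) - s n"]
          by (simp add: max_def split: if_splits)
      qed
    qed
    show "\<exists>N. \<forall>m\<ge>N. \<forall>n\<ge>N. av (s m - s n) < e"
    proof (intro exI allI impI)
      fix m n assume mn: "m \<ge> N" "n \<ge> N"
      show "av (s m - s n) < e"
      proof (cases "n \<le> m")
        case True
        then show ?thesis using key[OF mn(2), rule_format, of "m - n"] by simp
      next
        case False
        then show ?thesis using key[OF mn(1), rule_format, of "n - m"] av_sub_comm by simp
      qed
    qed
  qed
qed

lemma conv_subseq:
  assumes "av_conv av s L" "\<And>n. r n \<ge> n"
  shows "av_conv av (\<lambda>n. s (r n)) L"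
  unfolding av_conv_def
proof (intro allI impI)
  fix e :: real assume "e > 0"
  then obtain N where "\<forall>n\<ge>N. av (s n - L) < e" using assms(1) unfolding av_conv_def by blast
  then show "\<exists>N. \<forall>n\<ge>N. av (s (r n) - L) < e" using assms(2) by (meson le_trans)
qed

end

definition lser :: "'a::field_char_0 \<Rightarrow> nat \<Rightarrow> 'a" where
  "lser z n = (\<Sum>k=1..n. (-1) ^ (k + 1) * z ^ k / of_nat k)"

lemma nat_le_pow: "(p::nat) \<ge> 2 \<Longrightarrow> k \<ge> 1 \<Longrightarrow> real k \<le> real p ^ (k - 1)"
proof (induction k)
  case (Suc k)
  show ?case
  proof (cases "k = 0")
    case False
    then have "real k \<le> real p ^ (k - 1)" using Suc by simp
    moreover have "real p ^ (k - 1) \<ge> 1" using Suc.prems by simp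
    ultimately have "real (Suc k) \<le> 2 * real p ^ (k - 1)" by linarith
    also have "\<dots> \<le> real p * real p ^ (k - 1)" using Suc.prems by (intro mult_right_mono) auto
    also have "\<dots> = real p ^ (Suc k - 1)" using False by (cases k) auto
    finally show ?thesis .
  qed simp
qed simp

lemma n_sq_pow_null: "0 \<le> r \<Longrightarrow> r < (1::real) \<Longrightarrow> (\<lambda>n. real n ^ 2 * r ^ n) \<longlonglongrightarrow> 0"
proof -
  assume r: "0 \<le> r" "r < 1"
  have "norm (sqrt r) < 1" using r by simp
  then have "(\<lambda>n. of_nat n * sqrt r ^ n) \<longlonglongrightarrow> (0::real)" by (rule powser_times_n_limit_0)
  then have "(\<lambda>n. (of_nat n * sqrt r ^ n) ^ 2) \<longlonglongrightarrow> (0::real)" using tendsto_power[of _ 0 _ 2] by fastforce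
  moreover have "(of_nat n * sqrt r ^ n) ^ 2 = real n ^ 2 * r ^ n" for n
  proof -
    have "(of_nat n * sqrt r ^ n) ^ 2 = real n ^ 2 * (sqrt r ^ 2) ^ n"
      unfolding power_mult_distrib by (metis power_mult mult.commute)
    then show ?thesis using r by simp
  qed
  ultimately show ?thesis by simp
qed

context cp begin

definition ell :: "'a \<Rightarrow> 'a" where "ell z = av_lim av (lser z)"

lemma lser_term_bound:
  assumes "av z \<le> r" "k \<ge> 1"
  shows "av ((-1) ^ (k + 1) * z ^ k / of_nat k) \<le> real k * r ^ k"
proof -
  have k: "av (of_nat k :: 'a) \<ge> 1 / real k" using av_of_nat_ge assms(2) by blast
  have kp: "av (of_nat k :: 'a) > 0" using assms(2) av_pos by simp
  have "av ((-1) ^ (k + 1) * z ^ k / of_nat k) = av z ^ k / av (of_nat k :: 'a)"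
    by (simp add: av_divide av_mult av_power)
  also have "\<dots> \<le> r ^ k / (1 / real k)"
    using k kp assms av_nonneg[of z] by (intro frac_le power_mono) auto
  also have "\<dots> = real k * r ^ k" by simp
  finally show ?thesis .
qed

lemma lser_Suc: "lser z (Suc n) - lser z n = (-1) ^ (Suc n + 1) * z ^ Suc n / of_nat (Suc n)"
  unfolding lser_def by simp

lemma ell_conv: assumes "av z < 1" shows "av_conv av (lser z) (ell z)"
proof -
  have "\<exists>L. av_conv av (lser z) L"
  proof (rule cauchy_succ, intro allI impI)
    fix e :: real assume e: "e > 0"
    have "(\<lambda>n. of_nat n * av z ^ n) \<longlonglongrightarrow> (0::real)"
      using assms av_nonneg[of z] by (intro powser_times_n_limit_0) simp
    then have "(\<lambda>n. of_nat (Suc n) * av z ^ (Suc n)) \<longlonglongrightarrow> (0::real)"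
      by (rule LIMSEQ_Suc)
    then obtain N where N: "\<forall>n\<ge>N. norm (of_nat (Suc n) * av z ^ (Suc n) - 0) < e"
      using e LIMSEQ_iff by (metis (no_types, lifting))
    show "\<exists>N. \<forall>n\<ge>N. av (lser z (Suc n) - lser z n) < e"
    proof (intro exI allI impI)
      fix n assume "n \<ge> N"
      then have "real (Suc n) * av z ^ Suc n < e" using N av_nonneg[of z] by simp
      then show "av (lser z (Suc n) - lser z n) < e" unfolding lser_Suc
        using lser_term_bound[of z "av z" "Suc n"] by simp
    qed
  qed
  then show ?thesis unfolding ell_def using av_lim_eq by blast
qed

lemma ell_bound:
  assumes "r < 1"
  shows "\<exists>B. \<forall>z. av z \<le> r \<longrightarrow> av (ell z) \<le> B"
proof -
  have r0: "max r 0 < 1" "max r 0 \<ge> 0" using assms by auto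
  have "(\<lambda>n. of_nat n * max r 0 ^ n) \<longlonglongrightarrow> (0::real)"
    using r0 by (intro powser_times_n_limit_0) simp
  then have "Bseq (\<lambda>n. of_nat n * max r 0 ^ n)" by (rule convergent_imp_Bseq[OF convergentI])
  then obtain K where K: "K > 0" "\<forall>n. norm (of_nat n * max r 0 ^ n) \<le> K" by (rule BseqE)
  show ?thesis
  proof (intro exI allI impI)
    fix z assume z: "av z \<le> r"
    then have z1: "av z < 1" using assms by simp
    have "\<forall>n\<ge>0. av (lser z n) \<le> K"
    proof (intro allI impI)
      fix n :: nat
      show "av (lser z n) \<le> K" unfolding lser_def
      proof (rule av_sum_le)
        fix k assume "k \<in> {1..n}"
        then have "av ((-1) ^ (k + 1) * z ^ k / of_nat k) \<le> real k * max r 0 ^ k"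
          using z by (intro lser_term_bound) auto
        also have "\<dots> \<le> K" using K(2)[rule_format, of k] r0 by simp
        finally show "av ((-1) ^ (k + 1) * z ^ k / of_nat k) \<le> K" .
      qed (use K in auto)
    qed
    then show "av (ell z) \<le> K" using conv_limit_bound[OF ell_conv[OF z1]] by blast
  qed
qed

lemma ell_small:
  assumes "av z \<le> 1 / real p"
  shows "av (ell z) \<le> av z"
proof -
  have p2: "p \<ge> 2" using p_gt1 by simp
  have z1: "av z < 1" using assms p_gt1 by (smt (verit) divide_less_eq_1_pos of_nat_1 of_nat_less_iff)
  have "\<forall>n\<ge>0. av (lser z n) \<le> av z"
  proof (intro allI impI)
    fix n :: nat
    show "av (lser z n) \<le> av z" unfolding lser_def
    proof (rule av_sum_le)
      fix k assume "k \<in> {1..n}"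
      then have k1: "k \<ge> 1" by simp
      have "av ((-1) ^ (k + 1) * z ^ k / of_nat k) \<le> real k * av z ^ k"
        using k1 by (intro lser_term_bound) auto
      also have "\<dots> = av z * (real k * av z ^ (k - 1))" using k1
        by (cases k) (auto simp: algebra_simps)
      also have "\<dots> \<le> av z * 1"
      proof (rule mult_left_mono)
        have "real k * av z ^ (k - 1) \<le> real k * (1 / real p) ^ (k - 1)"
          using assms av_nonneg[of z] by (intro mult_left_mono power_mono) auto
        also have "\<dots> = real k / real p ^ (k - 1)" by (simp add: power_divide)
        also have "\<dots> \<le> 1" using nat_le_pow[OF p2 k1] p_gt1 by simp
        finally show "real k * av z ^ (k - 1) \<le> 1" .
      qed (rule av_nonneg)
      finally show "av ((-1) ^ (k + 1) * z ^ k / of_nat k) \<le> av z" by simp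
    qed (auto simp: av_nonneg)
  qed
  then show ?thesis using conv_limit_bound[OF ell_conv[OF z1]] by blast
qed

lemma ell_0[simp]: "ell 0 = 0"
proof -
  have "lser (0::'a) n = 0" for n unfolding lser_def by (intro sum.neutral) auto
  then have "av_conv av (lser 0) 0" unfolding av_conv_def by simp
  then show ?thesis unfolding ell_def by (rule av_lim_eq)
qed

end

lemma binom_step_nat: "Suc j * (m choose Suc j) = (m - j) * (m choose j)"
  using binomial_absorption[of j m] binomial_absorb_comp[of m j] by simp

context cp begin

lemma av_pn: "av (of_nat (p ^ n) :: 'a) = 1 / real p ^ n"
  by (simp add: av_power av_p power_one_over)

lemma binom_cong:
  fixes n :: nat
  defines "q \<equiv> p ^ n"
  shows "j < q \<Longrightarrow> av (of_nat ((q - 1) choose j) - (-1) ^ j :: 'a) \<le> real j / real p ^ n"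
proof (induction j)
  case 0 then show ?case by simp
next
  case (Suc j)
  have jq: "j < q" "Suc j \<le> q" using Suc.prems by auto
  have IH: "av (of_nat ((q - 1) choose j) - (-1) ^ j :: 'a) \<le> real j / real p ^ n" using Suc jq by simp
  define w :: 'a where "w = of_nat q / of_nat (Suc j)"
  have pn: "real p ^ n > 0" using p_gt1 by simp
  have sj: "av (of_nat (Suc j) :: 'a) > 0" by (rule av_pos) (simp del: of_nat_Suc)
  have avw: "av w \<le> real (Suc j) / real p ^ n"
  proof -
    have "av w = (1 / real p ^ n) / av (of_nat (Suc j) :: 'a)" unfolding w_def q_def
      by (simp add: av_divide av_power av_p power_divide)
    also have "\<dots> \<le> (1 / real p ^ n) / (1 / real (Suc j))"
      using av_of_nat_ge[of "Suc j"] pn sj by (intro divide_left_mono) (auto simp del: of_nat_Suc)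
    also have "\<dots> = real (Suc j) / real p ^ n" by simp
    finally show ?thesis .
  qed
  have w1: "av w \<le> 1"
  proof -
    have "real (Suc j) \<le> real p ^ n" using jq(2) unfolding q_def by (metis of_nat_le_iff of_nat_power)
    then show ?thesis using avw pn by (smt (verit) divide_le_eq_1_pos)
  qed
  have step: "(of_nat ((q - 1) choose Suc j) :: 'a) = of_nat ((q - 1) choose j) * (w - 1)"
  proof -
    have "(of_nat (Suc j * ((q - 1) choose Suc j)) :: 'a) = of_nat ((q - 1 - j) * ((q - 1) choose j))"
      using binom_step_nat by metis
    then have "of_nat (Suc j) * (of_nat ((q - 1) choose Suc j) :: 'a) = of_nat (q - 1 - j) * of_nat ((q - 1) choose j)"
      by (metis of_nat_mult)
    moreover have "(of_nat (q - 1 - j) :: 'a) = of_nat q - of_nat (Suc j)" using jq by (simp add: of_nat_diff)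
    ultimately have "of_nat (Suc j) * (of_nat ((q - 1) choose Suc j) :: 'a) = (of_nat q - of_nat (Suc j)) * of_nat ((q - 1) choose j)"
      by simp
    then show ?thesis unfolding w_def
      by (simp add: field_simps del: of_nat_Suc)
  qed
  have eq: "(of_nat ((q - 1) choose Suc j) - (-1) ^ Suc j :: 'a)
      = (of_nat ((q - 1) choose j) - (-1) ^ j) * (w - 1) + (-1) ^ j * w"
    unfolding step by (simp add: algebra_simps)
  have a1: "av ((of_nat ((q - 1) choose j) - (-1) ^ j) * (w - 1)) \<le> real (Suc j) / real p ^ n"
  proof -
    have "av (w - 1) \<le> 1" using av_diff[of w 1] w1 by simp
    then have "av ((of_nat ((q - 1) choose j) - (-1) ^ j) * (w - 1)) \<le> av (of_nat ((q - 1) choose j) - (-1) ^ j :: 'a)"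
      unfolding av_mult using av_nonneg by (simp add: mult_left_le)
    also have "\<dots> \<le> real (Suc j) / real p ^ n" using IH pn
      by (smt (verit, best) divide_right_mono of_nat_Suc)
    finally show ?thesis .
  qed
  have a2: "av ((-1) ^ j * w) \<le> real (Suc j) / real p ^ n" using avw by (simp add: av_mult av_power)
  show ?case unfolding eq using av_ultra[of "(of_nat ((q - 1) choose j) - (-1) ^ j) * (w - 1)" "(-1) ^ j * w"] a1 a2
    by (simp add: max_def split: if_splits)
qed

lemma binom_expand:
  fixes z :: 'a
  assumes "q \<ge> 1"
  shows "((1 + z) ^ q - 1) / of_nat q = (\<Sum>k=1..q. of_nat ((q - 1) choose (k - 1)) * z ^ k / of_nat k)"
proof -
  have "(1 + z) ^ q = (\<Sum>k\<le>q. of_nat (q choose k) * z ^ k)"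
    using binomial_ring[of z 1 q] by (simp add: add.commute)
  also have "\<dots> = 1 + (\<Sum>k=1..q. of_nat (q choose k) * z ^ k)"
    by (simp add: atMost_atLeast0 sum.atLeast_Suc_atMost)
  finally have "((1 + z) ^ q - 1) / of_nat q = (\<Sum>k=1..q. of_nat (q choose k) * z ^ k) / of_nat q" by simp
  also have "\<dots> = (\<Sum>k=1..q. of_nat (q choose k) * z ^ k / of_nat q)" by (simp add: sum_divide_distrib)
  also have "\<dots> = (\<Sum>k=1..q. of_nat ((q - 1) choose (k - 1)) * z ^ k / of_nat k)"
  proof (rule sum.cong)
    fix k assume "k \<in> {1..q}"
    then have k: "k > 0" by simp
    have "(of_nat (k * (q choose k)) :: 'a) = of_nat (q * ((q - 1) choose (k - 1)))"
      using times_binomial_minus1_eq[OF k] by metis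
    then have "of_nat k * (of_nat (q choose k) :: 'a) = of_nat q * of_nat ((q - 1) choose (k - 1))" by simp
    then show "of_nat (q choose k) * z ^ k / of_nat q = of_nat ((q - 1) choose (k - 1)) * z ^ k / of_nat k"
      using k assms by (simp add: field_simps)
  qed simp
  finally show ?thesis .
qed

end

context cp begin

lemma pn_ge: "n \<le> p ^ n"
proof -
  have "n < 2 ^ n" by simp
  also have "(2::nat) ^ n \<le> p ^ n" using p_gt1 by (intro power_mono) auto
  finally show ?thesis by simp
qed

lemma pn_null: "av_conv av (\<lambda>n. of_nat (p ^ n) :: 'a) 0"
proof (rule conv_real_null[where N=0])
  show "\<forall>n\<ge>0. av (of_nat (p ^ n) :: 'a) \<le> 1 / real p ^ n" using av_pn by simp
  show "(\<lambda>n. 1 / real p ^ n) \<longlonglongrightarrow> 0" using p_gt1 by (intro LIMSEQ_divide_realpow_zero) simp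
qed

lemma ell_limit:
  assumes z: "av z < 1"
  shows "av_conv av (\<lambda>n. ((1 + z) ^ (p ^ n) - 1) / of_nat (p ^ n)) (ell z)"
proof -
  define r where "r = av z"
  have r: "0 \<le> r" "r < 1" using z av_nonneg r_def by auto
  have "(\<lambda>n. real n ^ 2 * r ^ n) \<longlonglongrightarrow> 0" using r by (rule n_sq_pow_null)
  then have "Bseq (\<lambda>n. real n ^ 2 * r ^ n)" by (rule convergent_imp_Bseq[OF convergentI])
  then obtain K where K: "K > 0" "\<forall>n. norm (real n ^ 2 * r ^ n) \<le> K" by (rule BseqE)
  have A: "av_conv av (\<lambda>n. lser z (p ^ n)) (ell z)"
    using conv_subseq[OF ell_conv[OF z], of "\<lambda>n. p ^ n"] pn_ge by simp
  define D where "D n = ((1 + z) ^ (p ^ n) - 1) / of_nat (p ^ n) - lser z (p ^ n)" for n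
  have D: "av_conv av D 0"
  proof (rule conv_real_null[where N=0])
    show "(\<lambda>n. K / real p ^ n) \<longlonglongrightarrow> 0" using p_gt1 by (intro LIMSEQ_divide_realpow_zero) simp
    show "\<forall>n\<ge>0. av (D n) \<le> K / real p ^ n"
    proof (intro allI impI)
      fix n :: nat
      define q where "q = p ^ n"
      have q1: "q \<ge> 1" using p_gt1 q_def by simp
      have pn: "real p ^ n > 0" using p_gt1 by simp
      have "D n = (\<Sum>k=1..q. (of_nat ((q - 1) choose (k - 1)) - (-1) ^ (k - 1)) * z ^ k / of_nat k)"
      proof -
        have "D n = (\<Sum>k=1..q. of_nat ((q - 1) choose (k - 1)) * z ^ k / of_nat k) - lser z q"
          unfolding D_def q_def using binom_expand[OF q1[unfolded q_def]] by simp
        also have "\<dots> = (\<Sum>k=1..q. of_nat ((q - 1) choose (k - 1)) * z ^ k / of_nat k - (-1) ^ (k + 1) * z ^ k / of_nat k)"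
          unfolding lser_def by (simp only: sum_subtractf)
        also have "\<dots> = (\<Sum>k=1..q. (of_nat ((q - 1) choose (k - 1)) - (-1) ^ (k - 1)) * z ^ k / of_nat k)"
        proof (rule sum.cong)
          fix k assume "k \<in> {1..q}"
          then have "(-1) ^ (k + 1) = ((-1) ^ (k - 1) :: 'a)" by (cases k) auto
          then show "of_nat ((q - 1) choose (k - 1)) * z ^ k / of_nat k - (-1) ^ (k + 1) * z ^ k / of_nat k
              = (of_nat ((q - 1) choose (k - 1)) - (-1) ^ (k - 1)) * z ^ k / of_nat k"
            by (simp add: algebra_simps diff_divide_distrib)
        qed simp
        finally show ?thesis .
      qed
      also have "av \<dots> \<le> K / real p ^ n"
      proof (rule av_sum_le)
        fix k assume k: "k \<in> {1..q}"
        have c: "av (of_nat ((q - 1) choose (k - 1)) - (-1) ^ (k - 1) :: 'a) \<le> real (k - 1) / real p ^ n"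
        proof -
          have kq: "k - 1 < p ^ n" using k q_def by auto
          show ?thesis using binom_cong[OF kq] k q_def by simp
        qed
        have kk: "av (of_nat k :: 'a) \<ge> 1 / real k" using av_of_nat_ge k by simp
        have kp: "av (of_nat k :: 'a) > 0" using k av_pos by simp
        have "av ((of_nat ((q - 1) choose (k - 1)) - (-1) ^ (k - 1)) * z ^ k / of_nat k)
            = av (of_nat ((q - 1) choose (k - 1)) - (-1) ^ (k - 1) :: 'a) * r ^ k / av (of_nat k :: 'a)"
          by (simp add: av_mult av_divide av_power r_def)
        also have "\<dots> \<le> (real k / real p ^ n) * r ^ k / (1 / real k)"
        proof -
          have "real (k - 1) / real p ^ n \<le> real k / real p ^ n" using pn by (intro divide_right_mono) auto
          then have c2: "av (of_nat ((q - 1) choose (k - 1)) - (-1) ^ (k - 1) :: 'a) \<le> real k / real p ^ n"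
            using c by linarith
          have k0: "real k > 0" using k by simp
          show ?thesis using c2 kk kp r pn k0 by (intro frac_le mult_mono) (auto intro: av_nonneg)
        qed
        also have "\<dots> = (real k ^ 2 * r ^ k) / real p ^ n" by (simp add: power2_eq_square)
        also have "\<dots> \<le> K / real p ^ n" using K(2)[rule_format, of k] r pn by (intro divide_right_mono) auto
        finally show "av ((of_nat ((q - 1) choose (k - 1)) - (-1) ^ (k - 1)) * z ^ k / of_nat k) \<le> K / real p ^ n" .
      qed (use K pn in auto)
      finally show "av (D n) \<le> K / real p ^ n" .
    qed
  qed
  have "av_conv av (\<lambda>n. D n + lser z (p ^ n)) (0 + ell z)" by (rule conv_add[OF D A])
  then show ?thesis unfolding D_def by simp
qed

lemma ell_add:
  assumes z: "av z < 1" and w: "av w < 1"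
  shows "ell (z + w + z * w) = ell z + ell w"
proof -
  have zw: "av (z + w + z * w) < 1"
  proof -
    have "av z * av w \<le> av z * 1" using w av_nonneg[of z] by (intro mult_left_mono) auto
    then have "av (z * w) < 1" using z by (simp add: av_mult)
    moreover have "av (z + w) < 1" using z w av_ultra[of z w] by (metis le_less_trans max_less_iff_conj)
    ultimately show ?thesis using av_ultra[of "z + w" "z * w"] by (metis le_less_trans max_less_iff_conj)
  qed
  define a where "a n = ((1 + z) ^ (p ^ n) - 1) / of_nat (p ^ n)" for n
  define b where "b n = ((1 + w) ^ (p ^ n) - 1) / of_nat (p ^ n)" for n
  have A: "av_conv av a (ell z)" unfolding a_def by (rule ell_limit[OF z])
  have B: "av_conv av b (ell w)" unfolding b_def by (rule ell_limit[OF w])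
  have C: "av_conv av (\<lambda>n. ((1 + (z + w + z * w)) ^ (p ^ n) - 1) / of_nat (p ^ n)) (ell (z + w + z * w))"
    by (rule ell_limit[OF zw])
  have eq: "((1 + (z + w + z * w)) ^ (p ^ n) - 1) / of_nat (p ^ n) = a n + b n + a n * (b n * of_nat (p ^ n))" for n
  proof -
    have pn0: "(of_nat (p ^ n) :: 'a) \<noteq> 0" using p_gt1 by simp
    have "1 + (z + w + z * w) = (1 + z) * (1 + w)" by (simp add: algebra_simps)
    then have "(1 + (z + w + z * w)) ^ (p ^ n) = (1 + z) ^ (p ^ n) * (1 + w) ^ (p ^ n)" by (simp add: power_mult_distrib)
    then show ?thesis unfolding a_def b_def using pn0 by (simp add: field_simps)
  qed
  have N: "av_conv av (\<lambda>n. a n * (b n * of_nat (p ^ n))) 0"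
    by (rule conv_mult_null[OF A conv_mult_null[OF B pn_null]])
  have "av_conv av (\<lambda>n. a n + b n + a n * (b n * of_nat (p ^ n))) (ell z + ell w + 0)"
    by (rule conv_add[OF conv_add[OF A B] N])
  then have "av_conv av (\<lambda>n. ((1 + (z + w + z * w)) ^ (p ^ n) - 1) / of_nat (p ^ n)) (ell z + ell w)"
    unfolding eq by simp
  then show ?thesis using C conv_unique by blast
qed

definition lg :: "'a \<Rightarrow> 'a" where "lg u = ell (u - 1)"

definition U1 :: "'a \<Rightarrow> bool" where "U1 u \<longleftrightarrow> av (u - 1) < 1"

lemma U1_av: "U1 u \<Longrightarrow> av u = 1"
  unfolding U1_def using av_add_eq[of "u - 1" 1] by simp

lemma U1_nz: "U1 u \<Longrightarrow> u \<noteq> 0"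
  using U1_av by fastforce

lemma U1_1[simp]: "U1 1" unfolding U1_def by simp

lemma lg_1[simp]: "lg 1 = 0" unfolding lg_def by simp

lemma U1_mult: "U1 u \<Longrightarrow> U1 v \<Longrightarrow> U1 (u * v)"
proof -
  assume u: "U1 u" and v: "U1 v"
  have e: "u * v - 1 = (u - 1) * v + (v - 1)" by (simp add: algebra_simps)
  have h1: "av ((u - 1) * v) < 1" using u v U1_av unfolding U1_def by (simp add: av_mult)
  have h2: "av (v - 1) < 1" using v unfolding U1_def .
  have "av ((u - 1) * v + (v - 1)) < 1" using av_ultra[of "(u - 1) * v" "v - 1"] h1 h2
    by (metis le_less_trans max_less_iff_conj)
  then show "U1 (u * v)" unfolding U1_def e .
qed

lemma lg_mult: "U1 u \<Longrightarrow> U1 v \<Longrightarrow> lg (u * v) = lg u + lg v"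
proof -
  assume u: "U1 u" and v: "U1 v"
  have e: "u * v - 1 = (u - 1) + (v - 1) + (u - 1) * (v - 1)" by (simp add: algebra_simps)
  have z: "av (u - 1) < 1" "av (v - 1) < 1" using u v unfolding U1_def by auto
  show ?thesis unfolding lg_def e by (rule ell_add[OF z])
qed

lemma U1_power: "U1 u \<Longrightarrow> U1 (u ^ n)"
  by (induction n) (simp_all add: U1_mult)

lemma lg_power: "U1 u \<Longrightarrow> lg (u ^ n) = of_nat n * lg u"
  by (induction n) (simp_all add: lg_mult U1_power algebra_simps)

lemma U1_inverse: "U1 u \<Longrightarrow> U1 (inverse u)"
proof -
  assume u: "U1 u"
  then have "u \<noteq> 0" "av u = 1" using U1_nz U1_av by auto
  then have "inverse u - 1 = - (u - 1) / u" by (simp add: field_simps)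
  then show ?thesis using u \<open>av u = 1\<close> unfolding U1_def by (simp add: av_divide av_sub_comm)
qed

lemma U1_divide: "U1 u \<Longrightarrow> U1 v \<Longrightarrow> U1 (u / v)"
  by (simp add: divide_inverse U1_mult U1_inverse)

lemma U1_av_small: "av z < 1 \<Longrightarrow> U1 (1 + z)"
  unfolding U1_def by simp

end

context cp begin

definition P :: "int \<Rightarrow> 'a" where "P m = of_nat p powi m"

lemma p_nz: "(of_nat p :: 'a) \<noteq> 0" using p_gt1 by simp

lemma P_nz: "P m \<noteq> 0" unfolding P_def using p_nz by (simp add: power_int_def)

lemma P_add: "P (a + b) = P a * P b" unfolding P_def using p_nz by (simp add: power_int_add)

lemma P_0[simp]: "P 0 = 1" unfolding P_def by simp
lemma P_1: "P 1 = of_nat p" unfolding P_def by simp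

lemma P_nat: "P (int k) = of_nat p ^ k" unfolding P_def by simp

lemma P_pow: "P a ^ k = P (a * int k)" unfolding P_def by (simp add: power_int_power')

lemma P_diff: "P (a - b) = P a / P b"
proof -
  have "P a = P (a - b) * P b" using P_add[of "a - b" b] by simp
  then show ?thesis using P_nz[of b] by (simp add: field_simps)
qed

lemma P_neg: "P (- a) = inverse (P a)"
  using P_diff[of 0 a] by (simp add: divide_inverse)

lemma av_P_nat: "av (P (int k)) = 1 / real p ^ k"
  unfolding P_nat by (simp add: av_power av_p power_divide)

lemma U1_P: "U1 (P m) \<Longrightarrow> m = 0"
proof -
  assume "U1 (P m)"
  then have a: "av (P m) = 1" by (rule U1_av)
  have pk: "real p ^ k = 1 \<Longrightarrow> k = 0" for k
    using p_gt1 by (metis less_one nat_1_eq_mult_iff of_nat_1 of_nat_eq_iff of_nat_power power_0_left power_eq_0_iff power_inject_exp one_less_power zero_neq_one less_numeral_extra(4) not_less0)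
  show "m = 0"
  proof (cases "m \<ge> 0")
    case True
    then obtain k where "m = int k" by (metis nonneg_eq_int)
    then have "1 / real p ^ k = 1" using a av_P_nat by simp
    then have "k = 0" using pk by simp
    then show ?thesis using \<open>m = int k\<close> by simp
  next
    case False
    then obtain k where k: "m = - int k" by (metis nonpos_int_cases linorder_not_le less_imp_le)
    then have "av (inverse (P (int k))) = 1" using a P_neg by simp
    then have "real p ^ k = 1" using av_P_nat[of k] by (simp add: av_inverse)
    then have "k = 0" using pk by simp
    then show ?thesis using k by simp
  qed
qed

lemma av_of_int_P: "c \<noteq> 0 \<Longrightarrow> \<exists>k::nat. av (of_int c :: 'a) = av (P (int k))"
  using av_of_int_form[of c] av_P_nat by metis

lemma resid0: "B \<noteq> 0 \<Longrightarrow> av (of_int A / of_int B :: 'a) \<le> 1 \<Longrightarrow> \<exists>n::int. av (of_int A / of_int B - of_int n :: 'a) < 1"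
proof (induction "nat \<bar>B\<bar>" arbitrary: A B rule: less_induct)
  case less
  show ?case
  proof (cases "int p dvd B")
    case True
    then obtain B' where B': "B = int p * B'" by auto
    then have B'0: "B' \<noteq> 0" using less.prems by auto
    show ?thesis
    proof (cases "int p dvd A")
      case True
      then obtain A' where A': "A = int p * A'" by auto
      have eq: "(of_int A / of_int B :: 'a) = of_int A' / of_int B'" using A' B' p_nz by simp
      have "nat \<bar>B'\<bar> < nat \<bar>B\<bar>" using B' B'0 p_gt1 by (simp add: abs_mult nat_mult_distrib)
      then show ?thesis using less.hyps[of B' A'] B'0 less.prems(2) unfolding eq by blast
    next
      case False
      then have "av (of_int A :: 'a) = 1" by (rule av_coprime)
      moreover have "av (of_int B :: 'a) \<le> 1 / real p" using True by (rule av_p_dvd)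
      moreover have "av (of_int B :: 'a) > 0" using less.prems av_pos by simp
      moreover have "real p * av (of_int B :: 'a) \<le> real p * (1 / real p)"
        using calculation(2) by (intro mult_left_mono) auto
      ultimately have "av (of_int A / of_int B :: 'a) \<ge> real p" using p_gt1 by (simp add: av_divide field_simps)
      then show ?thesis using less.prems(2) p_gt1 by simp
    qed
  next
    case False
    have "coprime (int p) B" using False prime_p
      by (simp add: prime_imp_coprime_int prime_nat_iff_prime)
    then obtain u v where uv: "u * int p + v * B = 1" by (metis bezout_int coprime_iff_gcd_eq_1)
    have avB: "av (of_int B :: 'a) = 1" using False by (rule av_coprime)
    have B0: "(of_int B :: 'a) \<noteq> 0" using less.prems by simp
    have "(of_int A / of_int B - of_int (A * v) :: 'a) = of_int A * (1 - of_int v * of_int B) / of_int B"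
      using B0 by (simp add: field_simps)
    also have "\<dots> = of_int (A * u * int p) / of_int B"
    proof -
      have "(1 - of_int v * of_int B :: 'a) = of_int (u * int p)" using uv
        by (metis add_diff_cancel_right' of_int_1 of_int_add of_int_mult)
      then show ?thesis by simp
    qed
    finally have e: "(of_int A / of_int B - of_int (A * v) :: 'a) = of_int (A * u * int p) / of_int B" .
    have "av (of_int (A * u * int p) :: 'a) \<le> 1 / real p" by (rule av_p_dvd) simp
    then have "av (of_int A / of_int B - of_int (A * v) :: 'a) \<le> 1 / real p" unfolding e
      by (simp add: av_divide avB)
    also have "\<dots> < 1" using p_gt1 by simp
    finally show ?thesis by blast
  qed
qed

lemma resid:
  assumes "b \<noteq> 0" "av (of_int a * P m / of_int b) \<le> 1"
  shows "\<exists>n::int. av (of_int a * P m / of_int b - of_int n) < 1"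
proof (cases "m \<ge> 0")
  case True
  then obtain k where k: "m = int k" by (metis nonneg_eq_int)
  have e: "(of_int a * P m / of_int b :: 'a) = of_int (a * int p ^ k) / of_int b" using k P_nat by simp
  show ?thesis using resid0[of b "a * int p ^ k"] assms unfolding e by simp
next
  case False
  then obtain k where k: "m = - int k" by (metis nonpos_int_cases linorder_not_le less_imp_le)
  have e: "(of_int a * P m / of_int b :: 'a) = of_int a / of_int (b * int p ^ k)"
    using k P_neg P_nat p_nz by (simp add: field_simps)
  moreover have "b * int p ^ k \<noteq> 0" using assms(1) p_gt1 by simp
  ultimately show ?thesis using resid0[of "b * int p ^ k" a] assms unfolding e by simp
qed

definition close :: "'a \<Rightarrow> 'a \<Rightarrow> bool" (infix "\<approx>" 50) where "close u v \<longleftrightarrow> av (u - v) < 1"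

lemma close_refl: "u \<approx> u" unfolding close_def by simp
lemma close_sym: "u \<approx> v \<Longrightarrow> v \<approx> u" unfolding close_def by (simp add: av_sub_comm)
lemma close_trans: "u \<approx> v \<Longrightarrow> v \<approx> w \<Longrightarrow> u \<approx> w"
  unfolding close_def using av_ultra[of "u - v" "v - w"] by (simp add: max_def split: if_splits)
lemma close_add: "u \<approx> v \<Longrightarrow> u' \<approx> v' \<Longrightarrow> u + u' \<approx> v + v'"
  unfolding close_def using av_ultra[of "u - v" "u' - v'"] by (simp add: max_def algebra_simps split: if_splits)
lemma close_mult: "av c \<le> 1 \<Longrightarrow> u \<approx> v \<Longrightarrow> c * u \<approx> c * v"
proof -
  assume c: "av c \<le> 1" and uv: "u \<approx> v"
  have "av (u - v) < 1" using uv unfolding close_def .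
  then have "av c * av (u - v) < 1"
    using c av_nonneg[of c] av_nonneg[of "u - v"] by (metis le_less_trans mult_left_le_one_le)
  then show "c * u \<approx> c * v" unfolding close_def by (simp add: av_mult right_diff_distrib[symmetric])
qed

lemma close_sum:
  assumes "finite A" "\<And>j. j \<in> A \<Longrightarrow> f j \<approx> g j"
  shows "sum f A \<approx> sum g A"
  using assms by (induction A rule: finite_induct) (auto intro: close_add close_refl)

lemma pigeon:
  assumes s: "av s = 1" and K: "K \<ge> 1"
    and rel: "s ^ K \<approx> - (\<Sum>j<K. of_int (n j) * s ^ j)"
  shows "\<exists>M\<ge>1. U1 (s ^ M)"
proof -
  define Rep where "Rep w \<longleftrightarrow> (\<exists>g::nat \<Rightarrow> int. w \<approx> (\<Sum>j<K. of_int (g j) * s ^ j))" for w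
  obtain K' where K': "K = Suc K'" using K by (cases K) auto
  have avs: "av (s ^ m) = 1" for m using s by (simp add: av_power)
  have rep: "Rep (s ^ m)" for m
  proof (induction m)
    case 0
    have "(\<Sum>j<K. of_int (if j = 0 then 1 else 0) * s ^ j) = 1"
      unfolding K' by (subst sum.lessThan_Suc_shift) simp
    then show ?case unfolding Rep_def
      by (intro exI[of _ "\<lambda>j. if j = 0 then 1 else 0"]) (simp add: close_refl)
  next
    case (Suc m)
    then obtain g where g: "s ^ m \<approx> (\<Sum>j<K. of_int (g j) * s ^ j)" unfolding Rep_def by blast
    define g' where "g' j = (if j = 0 then 0 else g (j - 1)) - g K' * n j" for j
    have "s ^ Suc m \<approx> s * (\<Sum>j<K. of_int (g j) * s ^ j)"
      using close_mult[OF _ g, of s] s by simp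
    moreover have "s * (\<Sum>j<K. of_int (g j) * s ^ j) \<approx> (\<Sum>j<K. of_int (g' j) * s ^ j)"
    proof -
      have e1: "s * (\<Sum>j<K. of_int (g j) * s ^ j) = (\<Sum>j<K'. of_int (g j) * s ^ Suc j) + of_int (g K') * s ^ K"
        unfolding K' by (simp add: sum_distrib_left algebra_simps)
      have e2: "(\<Sum>j<K. of_int (if j = 0 then 0 else g (j - 1)) * s ^ j) = (\<Sum>j<K'. of_int (g j) * s ^ Suc j)"
        unfolding K' by (subst sum.lessThan_Suc_shift) simp
      have e3: "(\<Sum>j<K. of_int (g' j) * s ^ j) = (\<Sum>j<K'. of_int (g j) * s ^ Suc j) - of_int (g K') * (\<Sum>j<K. of_int (n j) * s ^ j)"
        unfolding g'_def using e2 by (simp add: algebra_simps sum_subtractf sum_distrib_left)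
      have "of_int (g K') * s ^ K \<approx> of_int (g K') * (- (\<Sum>j<K. of_int (n j) * s ^ j))"
        by (rule close_mult[OF av_of_int_le1 rel])
      then have h: "of_int (g K') * s ^ K \<approx> - (of_int (g K') * (\<Sum>j<K. of_int (n j) * s ^ j))"
        by simp
      have "(\<Sum>j<K'. of_int (g j) * s ^ Suc j) + of_int (g K') * s ^ K \<approx>
          (\<Sum>j<K'. of_int (g j) * s ^ Suc j) + - (of_int (g K') * (\<Sum>j<K. of_int (n j) * s ^ j))"
        by (rule close_add[OF close_refl h])
      then show ?thesis unfolding e1 e3 by (simp only: diff_conv_add_uminus)
    qed
    ultimately show ?case unfolding Rep_def using close_trans by blast
  qed
  define F where "F = (\<lambda>l. \<Sum>j<K. of_int (l ! j) * s ^ j) ` {l. set l \<subseteq> {0..<int p} \<and> length l = K}"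
  have finF: "finite F" unfolding F_def by (intro finite_imageI finite_lists_length_eq) simp
  have inF: "\<exists>v\<in>F. s ^ m \<approx> v" for m
  proof -
    obtain g where g: "s ^ m \<approx> (\<Sum>j<K. of_int (g j) * s ^ j)" using rep[of m] unfolding Rep_def by blast
    define l where "l = map (\<lambda>j. g j mod int p) [0..<K]"
    have lF: "(\<Sum>j<K. of_int (l ! j) * s ^ j) \<in> F"
      unfolding F_def l_def using p_gt1 by (intro imageI) auto
    have "(\<Sum>j<K. of_int (g j) * s ^ j) \<approx> (\<Sum>j<K. of_int (l ! j) * s ^ j)"
    proof (rule close_sum)
      fix j assume j: "j \<in> {..<K}"
      then have lj: "l ! j = g j mod int p" unfolding l_def by simp
      have "int p dvd (g j - g j mod int p)" by (simp add: mod_eq_dvd_iff)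
      then have "av (of_int (g j - g j mod int p) :: 'a) \<le> 1 / real p" by (rule av_p_dvd)
      also have "\<dots> < 1" using p_gt1 by simp
      finally have "of_int (g j) \<approx> (of_int (l ! j) :: 'a)" unfolding close_def lj by simp
      then have "s ^ j * of_int (g j) \<approx> s ^ j * of_int (l ! j)" by (rule close_mult[OF eq_refl[OF avs]])
      then show "of_int (g j) * s ^ j \<approx> of_int (l ! j) * s ^ j" by (simp add: mult.commute)
    qed simp
    then show ?thesis using lF g close_trans by blast
  qed
  then obtain \<phi> where \<phi>: "\<And>m. \<phi> m \<in> F \<and> s ^ m \<approx> \<phi> m" by metis
  have "\<not> inj \<phi>"
  proof
    assume "inj \<phi>"
    moreover have "finite (range \<phi>)" using finF \<phi> by (meson finite_subset image_subsetI)
    ultimately have "finite (UNIV :: nat set)" using finite_imageD by blast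
    then show False by simp
  qed
  then obtain a b where ab: "a \<noteq> b" "\<phi> a = \<phi> b" unfolding inj_def by blast
  have main: "\<exists>M\<ge>1. U1 (s ^ M)" if "a < b" "s ^ a \<approx> s ^ b" for a b
  proof (intro exI conjI)
    show "b - a \<ge> 1" using that by simp
    have "s ^ b = s ^ a * s ^ (b - a)" using that by (simp add: power_add[symmetric])
    then have "s ^ a - s ^ b = - (s ^ a * (s ^ (b - a) - 1))" by (simp add: algebra_simps)
    then have "av (s ^ (b - a) - 1) = av (s ^ a - s ^ b)" by (simp add: av_mult avs)
    then show "U1 (s ^ (b - a))" using that(2) unfolding U1_def close_def by simp
  qed
  have "s ^ a \<approx> s ^ b" using \<phi>[of a] \<phi>[of b] ab close_trans close_sym by metis
  then show ?thesis using ab(1) main close_sym by (metis linorder_neqE_nat)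
qed

end

context cp begin

lemma close_neg: "u \<approx> v \<Longrightarrow> - u \<approx> - v"
proof -
  assume "u \<approx> v"
  moreover have "- u - - v = - (u - v)" by simp
  ultimately show ?thesis unfolding close_def by (metis av_uminus)
qed

lemma alg_U1:
  assumes y0: "y \<noteq> 0" and alg: "algebraic_over_Q y"
  shows "\<exists>N m. N \<ge> 1 \<and> U1 (y ^ N / P m)"
proof -
  obtain q :: "int poly" where q: "q \<noteq> 0" "poly (map_poly of_int q) y = 0"
    using alg unfolding algebraic_over_Q_def by blast
  define D where "D = degree q"
  define c where "c i = coeff q i" for i
  define T where "T i = (of_int (c i) :: 'a) * y ^ i" for i
  have sum0: "(\<Sum>i\<le>D. T i) = 0"
  proof -
    have "degree (map_poly (of_int :: int \<Rightarrow> 'a) q) = D" unfolding D_def by (rule degree_map_poly) simp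
    moreover have "coeff (map_poly (of_int :: int \<Rightarrow> 'a) q) i = of_int (c i)" for i
      unfolding c_def by (rule coeff_map_poly) simp
    ultimately show ?thesis using q(2) unfolding poly_altdef T_def by simp
  qed
  have avT: "av (T i) = av (of_int (c i) :: 'a) * av y ^ i" for i
    unfolding T_def by (simp add: av_mult av_power)
  have ypos: "av y > 0" using y0 av_pos by simp
  define \<mu> where "\<mu> = Max ((\<lambda>i. av (T i)) ` {..D})"
  have \<mu>ge: "av (T i) \<le> \<mu>" if "i \<le> D" for i unfolding \<mu>_def using that by (intro Max_ge) auto
  have cD: "c D \<noteq> 0" using q(1) unfolding c_def D_def by simp
  have \<mu>pos: "\<mu> > 0"
  proof -
    have "T D \<noteq> 0" using cD y0 unfolding T_def by simp
    then have "av (T D) > 0" by (rule av_pos)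
    then show ?thesis using \<mu>ge[of D] by simp
  qed
  define I where "I = {i. i \<le> D \<and> av (T i) = \<mu>}"
  have finI: "finite I" unfolding I_def by simp
  have neI: "I \<noteq> {}"
  proof -
    have "\<mu> \<in> (\<lambda>i. av (T i)) ` {..D}" unfolding \<mu>_def by (intro Max_in) auto
    then show ?thesis unfolding I_def by auto
  qed
  define i0 where "i0 = Min I"
  define i1 where "i1 = Max I"
  have i0I: "i0 \<in> I" unfolding i0_def using finI neI by simp
  have i1I: "i1 \<in> I" unfolding i1_def using finI neI by simp
  have Ibd: "i0 \<le> i \<and> i \<le> i1" if "i \<in> I" for i unfolding i0_def i1_def using finI that by simp
  have i1D: "i1 \<le> D" using i1I unfolding I_def by simp
  have cI: "c i \<noteq> 0" if "i \<in> I" for i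
  proof
    assume "c i = 0"
    then have "av (T i) = 0" unfolding T_def by simp
    then show False using that \<mu>pos unfolding I_def by simp
  qed
  have notI: "av (T i) < \<mu>" if "i \<le> D" "i \<notin> I" for i
    using that \<mu>ge[of i] unfolding I_def by fastforce
  have i01: "i0 < i1"
  proof (rule ccontr)
    assume "\<not> i0 < i1"
    then have I1: "I = {i1}" using Ibd i1I by fastforce
    have "T i1 = - (\<Sum>i\<in>{..D} - {i1}. T i)"
      using sum0 sum.remove[of "{..D}" i1 T] i1D by (simp add: eq_neg_iff_add_eq_0)
    moreover have "av (\<Sum>i\<in>{..D} - {i1}. T i) < \<mu>"
      using \<mu>pos by (intro av_sum_less) (auto intro!: notI simp: I1)
    ultimately show False using i1I unfolding I_def by simp
  qed
  have ratio: "av y ^ (i1 - i) = av (of_int (c i) :: 'a) / av (of_int (c i1) :: 'a)" if "i \<in> I" "i \<le> i1" for i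
  proof -
    have "av (T i) = av (T i1)" using that i1I unfolding I_def by simp
    then have "av (of_int (c i) :: 'a) * av y ^ i = av (of_int (c i1) :: 'a) * (av y ^ i * av y ^ (i1 - i))"
      unfolding avT using that by (simp add: power_add[symmetric])
    moreover have "av y ^ i > 0" using ypos by simp
    moreover have "av (of_int (c i1) :: 'a) > 0" using cI[OF i1I] av_pos by simp
    ultimately show ?thesis using y0 cI[OF i1I] by (simp add: field_simps)
  qed
  define S where "S = {t::nat. t > 0 \<and> (\<exists>e. av (y ^ t) = av (P e))}"
  have diffS: "i1 - i \<in> S" if iI: "i \<in> I" and ii: "i < i1" for i
  proof -
    obtain ka where ka: "av (of_int (c i) :: 'a) = av (P (int ka))" using av_of_int_P cI[OF iI] by blast
    obtain kb where kb: "av (of_int (c i1) :: 'a) = av (P (int kb))" using av_of_int_P cI[OF i1I] by blast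
    have "av (y ^ (i1 - i)) = av (P (int ka - int kb))"
      using ratio[of i] iI ii by (simp add: av_power ka kb P_diff av_divide)
    then show ?thesis unfolding S_def using ii by auto
  qed
  define \<delta> where "\<delta> = (LEAST t. t \<in> S)"
  have \<delta>S: "\<delta> \<in> S" unfolding \<delta>_def using diffS[OF i0I i01] by (rule LeastI)
  then have \<delta>0: "\<delta> > 0" unfolding S_def by simp
  obtain e where e: "av (y ^ \<delta>) = av (P e)" using \<delta>S unfolding S_def by blast
  have dvdS: "\<delta> dvd t" if tS: "t \<in> S" for t
  proof (rule ccontr)
    assume nd: "\<not> \<delta> dvd t"
    define r where "r = t mod \<delta>"
    have r0: "r > 0" using nd unfolding r_def by (metis dvd_eq_mod_eq_0 gr0I)
    have r\<delta>: "r < \<delta>" unfolding r_def using \<delta>0 by simp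
    obtain et where et: "av (y ^ t) = av (P et)" using tS unfolding S_def by blast
    have tsplit: "t = \<delta> * (t div \<delta>) + r" unfolding r_def by simp
    have "av (y ^ t) = av (y ^ \<delta>) ^ (t div \<delta>) * av (y ^ r)"
      by (subst tsplit) (simp add: av_mult av_power power_add power_mult)
    moreover have pe: "av (P e) ^ k = av (P (e * int k))" for k by (metis P_pow av_power)
    ultimately have "av (P et) = av (P (e * int (t div \<delta>))) * av (y ^ r)"
      unfolding et e by simp
    then have "av (y ^ r) = av (P et) / av (P (e * int (t div \<delta>)))"
      using av_pos[OF P_nz] P_nz by (simp add: field_simps)
    then have "av (y ^ r) = av (P (et - e * int (t div \<delta>)))" by (simp add: P_diff av_divide)
    then have "r \<in> S" unfolding S_def using r0 by blast
    then show False using r\<delta> unfolding \<delta>_def by (metis not_less_Least)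
  qed
  define s where "s = y ^ \<delta> / P e"
  have avs: "av s = 1" unfolding s_def using e av_pos[OF P_nz] P_nz by (simp add: av_divide)
  define K where "K = (i1 - i0) div \<delta>"
  have i1K: "i1 = i0 + K * \<delta>" unfolding K_def using dvdS[OF diffS[OF i0I i01]] i01 by simp
  have K1: "K \<ge> 1" using i1K i01 by (cases K) auto
  define G where "G = (\<lambda>j. i0 + j * \<delta>) ` {..K}"
  have IG: "I \<subseteq> G"
  proof
    fix i assume iI: "i \<in> I"
    show "i \<in> G"
    proof (cases "i = i1")
      case True then show ?thesis unfolding G_def using i1K by auto
    next
      case False
      then have ii1: "i < i1" using Ibd[OF iI] by simp
      have d1: "\<delta> dvd (i1 - i)" using dvdS[OF diffS[OF iI ii1]] .
      have d2: "\<delta> dvd (i1 - i0)" using dvdS[OF diffS[OF i0I i01]] .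
      have "\<delta> dvd ((i1 - i0) - (i1 - i))" using dvd_diff_nat[OF d2 d1] .
      moreover have "(i1 - i0) - (i1 - i) = i - i0" using Ibd[OF iI] by simp
      ultimately obtain j where j: "i - i0 = \<delta> * j" by (auto elim: dvdE)
      have "i = i0 + j * \<delta>" using j Ibd[OF iI] by (metis le_add_diff_inverse mult.commute)
      moreover have "j \<le> K"
      proof -
        have "j * \<delta> \<le> K * \<delta>" using \<open>i = i0 + j * \<delta>\<close> i1K Ibd[OF iI] by simp
        then show ?thesis using \<delta>0 by simp
      qed
      ultimately show ?thesis unfolding G_def by auto
    qed
  qed
  have GD: "G \<subseteq> {..D}"
  proof
    fix i assume "i \<in> G"
    then obtain j where "j \<le> K" "i = i0 + j * \<delta>" unfolding G_def by auto
    then have "i \<le> i1" using i1K by simp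
    then show "i \<in> {..D}" using i1D by simp
  qed
  have injG: "inj_on (\<lambda>j. i0 + j * \<delta>) {..K}" using \<delta>0 by (intro inj_onI) simp
  have "(\<Sum>i\<le>D. T i) = (\<Sum>i\<in>{..D} - G. T i) + (\<Sum>i\<in>G. T i)"
    using GD by (intro sum.subset_diff) auto
  moreover have "(\<Sum>i\<in>G. T i) = (\<Sum>j\<le>K. T (i0 + j * \<delta>))"
    unfolding G_def by (rule sum.reindex_cong[OF injG refl refl])
  ultimately have Wrest: "(\<Sum>j\<le>K. T (i0 + j * \<delta>)) = - (\<Sum>i\<in>{..D} - G. T i)"
    using sum0 by (simp add: eq_neg_iff_add_eq_0 add.commute)
  have "av (\<Sum>i\<in>{..D} - G. T i) < \<mu>"
    using \<mu>pos IG by (intro av_sum_less) (auto intro!: notI)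
  then have avW: "av (\<Sum>j\<le>K. T (i0 + j * \<delta>)) < \<mu>" unfolding Wrest by simp
  define \<Lambda> where "\<Lambda> = (of_int (c i1) :: 'a) * y ^ i0 * P (e * int K)"
  define \<rho> where "\<rho> j = (of_int (c (i0 + j * \<delta>)) :: 'a) * P (e * int j - e * int K) / of_int (c i1)" for j
  have ci1: "(of_int (c i1) :: 'a) \<noteq> 0" using cI[OF i1I] by simp
  have Tform: "T (i0 + j * \<delta>) = \<Lambda> * (\<rho> j * s ^ j)" for j
  proof -
    have "P (e * int j) = P (e * int K) * P (e * int j - e * int K)" using P_add[of "e * int K" "e * int j - e * int K"] by simp
    moreover have "s ^ j = y ^ (\<delta> * j) / P (e * int j)" unfolding s_def by (simp add: power_divide power_mult P_pow)
    ultimately show ?thesis unfolding T_def \<Lambda>_def \<rho>_def using ci1 P_nz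
      by (simp add: field_simps power_add mult.commute)
  qed
  have av\<Lambda>: "av \<Lambda> = \<mu>"
  proof -
    have "av (P (e * int K)) = av y ^ (\<delta> * K)" using e by (simp add: P_pow[symmetric] av_power power_mult)
    then have "av \<Lambda> = av (T i1)" unfolding \<Lambda>_def using i1K by (simp add: avT av_mult av_power power_add mult.commute)
    then show ?thesis using i1I unfolding I_def by simp
  qed
  have \<Lambda>0: "\<Lambda> \<noteq> 0" using av\<Lambda> \<mu>pos by auto
  have sumrho: "av (\<Sum>j\<le>K. \<rho> j * s ^ j) < 1"
  proof -
    have "(\<Sum>j\<le>K. T (i0 + j * \<delta>)) = \<Lambda> * (\<Sum>j\<le>K. \<rho> j * s ^ j)" unfolding Tform by (simp add: sum_distrib_left)
    then have "\<mu> * av (\<Sum>j\<le>K. \<rho> j * s ^ j) < \<mu>" using avW av\<Lambda> by (simp add: av_mult)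
    then show ?thesis using \<mu>pos by simp
  qed
  have rhoK: "\<rho> K = 1" unfolding \<rho>_def using i1K ci1 by simp
  have rho_le: "av (\<rho> j) \<le> 1" if "j \<le> K" for j
  proof -
    have "i0 + j * \<delta> \<le> D" using that i1K i1D
      by (metis GD G_def atMost_iff image_eqI subsetD)
    then have "av (T (i0 + j * \<delta>)) \<le> \<mu>" by (rule \<mu>ge)
    then have "\<mu> * av (\<rho> j) \<le> \<mu>" unfolding Tform using av\<Lambda> avs by (simp add: av_mult av_power)
    then show ?thesis using \<mu>pos by simp
  qed
  have "\<forall>j\<in>{..K}. \<exists>n::int. av (\<rho> j - of_int n) < 1"
  proof
    fix j assume "j \<in> {..K}"
    then show "\<exists>n::int. av (\<rho> j - of_int n) < 1"
      unfolding \<rho>_def using resid[OF cI[OF i1I]] rho_le[of j] unfolding \<rho>_def by simp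
  qed
  then obtain nn where nn: "\<And>j. j \<in> {..K} \<Longrightarrow> av (\<rho> j - of_int (nn j)) < 1" by metis
  have c1: "(\<Sum>j<K. \<rho> j * s ^ j) \<approx> (\<Sum>j<K. of_int (nn j) * s ^ j)"
  proof (rule close_sum)
    fix j assume "j \<in> {..<K}"
    then have "av (\<rho> j - of_int (nn j)) < 1" using nn by simp
    moreover have "\<rho> j * s ^ j - of_int (nn j) * s ^ j = (\<rho> j - of_int (nn j)) * s ^ j" by (simp add: algebra_simps)
    ultimately show "\<rho> j * s ^ j \<approx> of_int (nn j) * s ^ j" unfolding close_def using avs by (simp add: av_mult av_power)
  qed simp
  have c2: "(\<Sum>j\<le>K. \<rho> j * s ^ j) \<approx> 0" unfolding close_def using sumrho by simp
  have split: "(\<Sum>j\<le>K. \<rho> j * s ^ j) = s ^ K + (\<Sum>j<K. \<rho> j * s ^ j)"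
    using rhoK by (simp add: lessThan_Suc_atMost[symmetric])
  have "(\<Sum>j\<le>K. \<rho> j * s ^ j) + - (\<Sum>j<K. \<rho> j * s ^ j) \<approx> 0 + - (\<Sum>j<K. of_int (nn j) * s ^ j)"
    by (rule close_add[OF c2 close_neg[OF c1]])
  then have rel: "s ^ K \<approx> - (\<Sum>j<K. of_int (nn j) * s ^ j)" unfolding split by simp
  obtain M where M: "M \<ge> 1" "U1 (s ^ M)" using pigeon[OF avs K1 rel] by blast
  have "s ^ M = y ^ (\<delta> * M) / P (e * int M)" unfolding s_def by (simp add: power_divide power_mult P_pow)
  moreover have "\<delta> * M \<ge> 1" using \<delta>0 M(1) by simp
  ultimately show ?thesis using M(2) by metis
qed

end

context cp begin

lemma E1: assumes x0: "x \<noteq> 0" shows "\<exists>N m. N \<ge> 1 \<and> U1 (x ^ N / P m)"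
proof -
  have "av x > 0" using x0 av_pos by simp
  then obtain y where y: "algebraic_over_Q y" "av (x - y) < av x" using dense by blast
  have y0: "y \<noteq> 0" using y(2) by auto
  have avy: "av y = av x"
  proof -
    have "av (- (x - y)) < av x" unfolding av_uminus using y(2) .
    then have "av (x + - (x - y)) = av x" by (rule av_add_eq)
    then show ?thesis by simp
  qed
  have Uxy: "U1 (x / y)"
  proof -
    have "x / y - 1 = (x - y) / y" using y0 by (simp add: field_simps)
    then show ?thesis unfolding U1_def using y(2) avy av_pos[OF y0] by (simp add: av_divide)
  qed
  obtain N m where Nm: "N \<ge> 1" "U1 (y ^ N / P m)" using alg_U1[OF y0 y(1)] by blast
  have ex: "x ^ N / P m = (y ^ N / P m) * (x / y) ^ N" using y0 by (simp add: power_divide)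
  have h: "U1 ((y ^ N / P m) * (x / y) ^ N)" by (rule U1_mult[OF Nm(2) U1_power[OF Uxy]])
  have "U1 (x ^ N / P m)" using h unfolding ex .
  then show ?thesis using Nm(1) by blast
qed

lemma lg_wd:
  assumes N: "N \<ge> 1" "N' \<ge> 1" and u: "U1 (x ^ N / P m)" and u': "U1 (x ^ N' / P m')"
  shows "lg (x ^ N / P m) / of_nat N = lg (x ^ N' / P m') / of_nat N'"
proof -
  have x0: "x \<noteq> 0" using U1_nz[OF u] N by auto
  define a where "a = x ^ N / P m"
  define b where "b = x ^ N' / P m'"
  have A: "a ^ N' = x ^ (N * N') / P (m * int N')" unfolding a_def by (simp add: power_divide power_mult P_pow)
  have B: "b ^ N = x ^ (N * N') / P (m' * int N)" unfolding b_def power_divide P_pow power_mult[symmetric]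
    by (simp only: mult.commute[of N' N])
  define X where "X = x ^ (N * N')"
  have X0: "X \<noteq> 0" unfolding X_def using x0 by simp
  have q: "(X / P (m * int N')) / (X / P (m' * int N)) = P (m' * int N) / P (m * int N')"
    using X0 P_nz[of "m * int N'"] P_nz[of "m' * int N"] by (simp add: divide_simps)
  have "a ^ N' / b ^ N = P (m' * int N - m * int N')"
    unfolding A B P_diff X_def[symmetric] by (rule q)
  moreover have "U1 (a ^ N' / b ^ N)" using U1_divide[OF U1_power[OF u, of N'] U1_power[OF u', of N]]
    unfolding a_def b_def .
  ultimately have "U1 (P (m' * int N - m * int N'))" by simp
  then have "m' * int N - m * int N' = 0" by (rule U1_P)
  then have "m * int N' = m' * int N" by simp
  then have "a ^ N' = b ^ N" unfolding A B by simp
  then have "lg (a ^ N') = lg (b ^ N)" by simp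
  then have "of_nat N' * lg a = of_nat N * lg b"
    using lg_power[OF u, of N'] lg_power[OF u', of N] unfolding a_def b_def by simp
  then show ?thesis unfolding a_def[symmetric] b_def[symmetric] using N by (simp add: field_simps)
qed

definition Lf :: "'a \<Rightarrow> 'a" where
  "Lf x = (if x = 0 then 0 else
     (let r = (SOME r. fst r \<ge> 1 \<and> U1 (x ^ fst r / P (snd r))) in lg (x ^ fst r / P (snd r)) / of_nat (fst r)))"

lemma Lf_eq:
  assumes "N \<ge> 1" "U1 (x ^ N / P m)"
  shows "Lf x = lg (x ^ N / P m) / of_nat N"
proof -
  have x0: "x \<noteq> 0" using U1_nz[OF assms(2)] assms(1) by auto
  define r where "r = (SOME r. fst r \<ge> 1 \<and> U1 (x ^ fst r / P (snd r)))"
  have "\<exists>r. fst r \<ge> 1 \<and> U1 (x ^ fst r / P (snd r))" using assms by (intro exI[of _ "(N, m)"]) simp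
  then have r: "fst r \<ge> 1 \<and> U1 (x ^ fst r / P (snd r))" unfolding r_def by (rule someI_ex)
  have "Lf x = lg (x ^ fst r / P (snd r)) / of_nat (fst r)" unfolding Lf_def r_def using x0 by (simp add: Let_def)
  also have "\<dots> = lg (x ^ N / P m) / of_nat N" using lg_wd r assms by blast
  finally show ?thesis .
qed

lemma Lf_mult:
  assumes x0: "x \<noteq> 0" and y0: "y \<noteq> 0"
  shows "Lf (x * y) = Lf x + Lf y"
proof -
  obtain N m where a: "N \<ge> 1" "U1 (x ^ N / P m)" using E1[OF x0] by blast
  obtain N' m' where b: "N' \<ge> 1" "U1 (y ^ N' / P m')" using E1[OF y0] by blast
  have e: "(x * y) ^ (N * N') / P (m * int N' + m' * int N) = (x ^ N / P m) ^ N' * (y ^ N' / P m') ^ N"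
  proof -
    have e1: "(x ^ N / P m) ^ N' = x ^ (N * N') / P (m * int N')" by (simp add: power_divide power_mult P_pow)
    have e2: "(y ^ N' / P m') ^ N = y ^ (N * N') / P (m' * int N)"
      by (simp add: power_divide P_pow mult.commute[of N N'] power_mult)
    have e3: "P (m * int N' + m' * int N) = P (m * int N') * P (m' * int N)" by (rule P_add)
    show ?thesis unfolding e1 e2 e3 power_mult_distrib by (rule times_divide_times_eq[symmetric])
  qed
  have U: "U1 ((x * y) ^ (N * N') / P (m * int N' + m' * int N))"
    unfolding e using a b by (intro U1_mult U1_power)
  have NN: "N * N' \<ge> 1" using a b by simp
  have "Lf (x * y) = lg ((x * y) ^ (N * N') / P (m * int N' + m' * int N)) / of_nat (N * N')"
    by (rule Lf_eq[OF NN U])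
  also have "\<dots> = (of_nat N' * lg (x ^ N / P m) + of_nat N * lg (y ^ N' / P m')) / of_nat (N * N')"
    unfolding e using a b by (simp add: lg_mult lg_power U1_power)
  also have "\<dots> = lg (x ^ N / P m) / of_nat N + lg (y ^ N' / P m') / of_nat N'"
    using a b by (simp add: field_simps)
  also have "\<dots> = Lf x + Lf y" using Lf_eq a b by simp
  finally show ?thesis .
qed

lemma Lf_small: "av z < 1 \<Longrightarrow> Lf (1 + z) = ell z"
  using Lf_eq[of 1 "1 + z" 0] U1_av_small[of z] unfolding lg_def by simp

lemma Lf_p: "Lf (of_nat p) = 0"
  using Lf_eq[of 1 "of_nat p" 1] P_1 p_nz by simp

lemma Lf_iwasawa: "is_iwasawa_log p av Lf"
  unfolding is_iwasawa_log_def
proof (intro conjI allI impI)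
  show "Lf 0 = 0" unfolding Lf_def by simp
  show "Lf (x * y) = Lf x + Lf y" if "x \<noteq> 0" "y \<noteq> 0" for x y using Lf_mult that by blast
  show "Lf (of_nat p) = 0" by (rule Lf_p)
  show "av_conv av (\<lambda>n. \<Sum>k = 1..n. (- 1) ^ (k + 1) * z ^ k / of_nat k) (Lf (1 + z))" if "av z < 1" for z
    using ell_conv[OF that] Lf_small[OF that] unfolding lser_def by simp
qed

lemma iwasawa_unique:
  assumes g: "is_iwasawa_log p av g"
  shows "g = Lf"
proof
  fix x
  have g0: "g 0 = 0" and gm: "\<And>x y. x \<noteq> 0 \<Longrightarrow> y \<noteq> 0 \<Longrightarrow> g (x * y) = g x + g y"
    and gp: "g (of_nat p) = 0"
    and gs: "\<And>z. av z < 1 \<Longrightarrow> av_conv av (lser z) (g (1 + z))"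
    using g unfolding is_iwasawa_log_def lser_def by auto
  have g1: "g 1 = 0" using gm[of 1 1] by simp
  have gpow: "g (x ^ n) = of_nat n * g x" if "x \<noteq> 0" for x n
    using that by (induction n) (simp_all add: g1 gm algebra_simps)
  have ginv: "g (inverse x) = - g x" if "x \<noteq> 0" for x
    using gm[of x "inverse x"] that g1 by (simp add: eq_neg_iff_add_eq_0 add.commute)
  have gP: "g (P m) = 0" for m
  proof (cases "m \<ge> 0")
    case True
    then obtain k where "m = int k" by (metis nonneg_eq_int)
    then show ?thesis using P_nat gpow[OF p_nz] gp by simp
  next
    case False
    then obtain k where k: "m = - int k" by (metis nonpos_int_cases linorder_not_le less_imp_le)
    have "P (int k) \<noteq> 0" by (rule P_nz)
    then show ?thesis using k P_neg ginv P_nat gpow[OF p_nz] gp by simp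
  qed
  show "g x = Lf x"
  proof (cases "x = 0")
    case True then show ?thesis using g0 unfolding Lf_def by simp
  next
    case False
    obtain N m where a: "N \<ge> 1" "U1 (x ^ N / P m)" using E1[OF False] by blast
    define u where "u = x ^ N / P m"
    have gu: "g u = lg u"
    proof -
      have "av (u - 1) < 1" using a(2) unfolding u_def U1_def .
      then have "av_conv av (lser (u - 1)) (g (1 + (u - 1)))" by (rule gs)
      moreover have "av_conv av (lser (u - 1)) (ell (u - 1))" by (rule ell_conv) fact
      ultimately show ?thesis unfolding lg_def using conv_unique by fastforce
    qed
    have xu: "x ^ N = u * P m" unfolding u_def using P_nz by simp
    have u0: "u \<noteq> 0" using U1_nz a(2) unfolding u_def by blast
    have "g (x ^ N) = g u + g (P m)" unfolding xu by (rule gm[OF u0 P_nz])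
    then have "of_nat N * g x = lg u" using gpow[OF False, of N] gP[of m] gu by simp
    then have "g x = lg u / of_nat N" using a(1) by (simp add: field_simps)
    then show ?thesis using Lf_eq[OF a] unfolding u_def by simp
  qed
qed

lemma log_p_is: "log_p p av = Lf"
  unfolding log_p_def
proof (rule the_equality)
  show "is_iwasawa_log p av Lf" by (rule Lf_iwasawa)
  show "g = Lf" if "is_iwasawa_log p av g" for g using that by (rule iwasawa_unique)
qed

lemma log_p_iwasawa: "is_iwasawa_log p av (log_p p av)"
  unfolding log_p_is by (rule Lf_iwasawa)

end

lemma sum_split_mult:
  fixes m k :: nat and f :: "nat \<Rightarrow> 'a::comm_monoid_add"
  shows "(\<Sum>a<m * k. f a) = (\<Sum>j<m. \<Sum>b<k. f (j * k + b))"
proof -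
  have "(\<Sum>a<m * k. f a) = (\<Sum>j<m. sum f {j * k..<j * k + k})" using sum.nat_group[of f k m] by simp
  also have "\<dots> = (\<Sum>j<m. \<Sum>b<k. f (j * k + b))"
  proof (rule sum.cong)
    fix j
    show "sum f {j * k..<j * k + k} = (\<Sum>b<k. f (j * k + b))"
      by (subst sum.atLeastLessThan_shift_0) (simp add: atLeast0LessThan comp_def)
  qed simp
  finally show ?thesis .
qed

lemma sum_alt_odd: "odd m \<Longrightarrow> (\<Sum>j<m. (-1) ^ j :: 'a::comm_ring_1) = 1"
proof -
  have ev: "(\<Sum>j<2 * k. (-1) ^ j :: 'a) = 0" for k
    by (induction k) (simp_all add: algebra_simps)
  assume "odd m"
  then obtain k where "m = Suc (2 * k)" by (metis oddE Suc_eq_plus1)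
  then show ?thesis using ev[of k] by simp
qed

locale cp_odd = cp p av for p and av :: "'a::field_char_0 \<Rightarrow> real" +
  assumes odd_p: "odd p"
begin

definition fL :: "'a \<Rightarrow> 'a" where "fL y = y * Lf y - y"

definition Sf :: "'a \<Rightarrow> nat \<Rightarrow> 'a" where
  "Sf x N = (\<Sum>a<p ^ N. fL (x + of_nat a) * (-1) ^ a)"

lemma Lf_1: "Lf 1 = 0" using Lf_small[of 0] by simp

lemma Lf_m1: "Lf (-1) = 0"
proof -
  have "Lf ((-1) * (-1)) = Lf (-1) + Lf (-1)" by (rule Lf_mult) auto
  then have "2 * Lf (-1) = 0" using Lf_1 by simp
  then show ?thesis by simp
qed

lemma fL_neg: "fL (- y) = - fL y"
proof (cases "y = 0")
  case True then show ?thesis unfolding fL_def by simp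
next
  case False
  have "Lf (- y) = Lf y" using Lf_mult[of "-1" y] False Lf_m1 by simp
  then show ?thesis unfolding fL_def by simp
qed

lemma pN_odd: "odd (p ^ N)" using odd_p by simp

lemma Lip:
  assumes x: "av x > 1"
  shows "\<exists>M\<ge>0. \<forall>a::nat. \<forall>h. av h \<le> 1 / real p \<longrightarrow> av (fL (x + of_nat a + h) - fL (x + of_nat a)) \<le> M * av h"
proof -
  define r where "r = 1 / av x"
  have r1: "r < 1" using x unfolding r_def by simp
  obtain B where B: "\<forall>z. av z \<le> r \<longrightarrow> av (ell z) \<le> B" using ell_bound[OF r1] by blast
  define M where "M = max 1 (max (av (Lf x)) B)"
  have x0: "x \<noteq> 0" using x by auto
  show ?thesis
  proof (intro exI[of _ M] conjI allI impI)
    show "M \<ge> 0" unfolding M_def by simp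
    fix a :: nat and h :: 'a
    assume h: "av h \<le> 1 / real p"
    define y where "y = x + of_nat a"
    have ay: "av y = av x" unfolding y_def using av_of_nat_le1[of a] x by (intro av_add_eq) simp
    have y0: "y \<noteq> 0" using ay x by auto
    have LY: "av (Lf y) \<le> M"
    proof -
      have az: "av (of_nat a / x) \<le> r" unfolding r_def using av_of_nat_le1[of a] x
        by (simp add: av_divide divide_right_mono)
      then have az1: "av (of_nat a / x) < 1" using r1 by simp
      have "y = x * (1 + of_nat a / x)" unfolding y_def using x0 by (simp add: field_simps)
      then have "Lf y = Lf x + Lf (1 + of_nat a / x)"
        using Lf_mult[OF x0 U1_nz[OF U1_av_small[OF az1]]] by simp
      also have "\<dots> = Lf x + ell (of_nat a / x)" using Lf_small[OF az1] by simp
      finally have "av (Lf y) \<le> max (av (Lf x)) (av (ell (of_nat a / x)))" using av_ultra by simp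
      also have "\<dots> \<le> M" unfolding M_def using B az by auto
      finally show ?thesis .
    qed
    define E where "E = ell (h / y)"
    have hy: "av (h / y) \<le> av h"
    proof -
      have "av h * 1 \<le> av h * av x" using x av_nonneg[of h] by (intro mult_left_mono) auto
      then show ?thesis using ay x by (simp add: av_divide divide_le_eq)
    qed
    have hy1: "av (h / y) \<le> 1 / real p" using hy h by simp
    have hy2: "av (h / y) < 1" using hy1 p_gt1 by (smt (verit) divide_less_eq_1_pos of_nat_1 of_nat_less_iff)
    have avE: "av E \<le> av h" unfolding E_def using ell_small[OF hy1] hy by simp
    have E1: "av E \<le> 1" using avE h p_gt1 by (smt (verit) divide_le_eq_1_pos of_nat_1 of_nat_less_iff)
    have "y + h = y * (1 + h / y)" using y0 by (simp add: field_simps)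
    then have LYH: "Lf (y + h) = Lf y + E"
      unfolding E_def using Lf_mult[OF y0 U1_nz[OF U1_av_small[OF hy2]]] Lf_small[OF hy2] by simp
    have diff: "fL (y + h) - fL y = y * E + h * (Lf y + E - 1)"
      unfolding fL_def LYH by (simp add: algebra_simps)
    have t1: "av (y * E) \<le> M * av h"
    proof -
      have "av (y * E) = av y * av E" by (simp add: av_mult)
      also have "\<dots> \<le> av y * av (h / y)" using avE hy by (intro mult_left_mono) (auto intro: av_nonneg order_trans[OF avE] simp: E_def ell_small[OF hy1])
      also have "\<dots> = av h" using y0 av_pos[OF y0] by (simp add: av_divide)
      also have "\<dots> \<le> M * av h" unfolding M_def using av_nonneg[of h] by (simp add: mult_le_cancel_right1)
      finally show ?thesis .
    qed
    have t2: "av (h * (Lf y + E - 1)) \<le> M * av h"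
    proof -
      have "av (Lf y + E - 1) \<le> max (av (Lf y + E)) (av 1)" by (rule av_diff)
      also have "\<dots> \<le> M"
      proof -
        have "av (Lf y + E) \<le> max (av (Lf y)) (av E)" by (rule av_ultra)
        then have "av (Lf y + E) \<le> M" using LY E1 unfolding M_def by auto
        then show ?thesis unfolding M_def by auto
      qed
      finally have "av (Lf y + E - 1) \<le> M" .
      then have "av (Lf y + E - 1) * av h \<le> M * av h" using av_nonneg[of h] by (rule mult_right_mono)
      then show ?thesis by (simp add: av_mult mult.commute)
    qed
    have "av (fL (y + h) - fL y) \<le> M * av h"
      unfolding diff using av_ultra[of "y * E" "h * (Lf y + E - 1)"] t1 t2 by simp
    then show "av (fL (x + of_nat a + h) - fL (x + of_nat a)) \<le> M * av h" unfolding y_def .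
  qed
qed

lemma Sf_diff_bound:
  assumes M: "M \<ge> 0" "\<forall>a::nat. \<forall>h. av h \<le> 1 / real p \<longrightarrow> av (fL (x + of_nat a + h) - fL (x + of_nat a)) \<le> M * av h"
    and h: "av h \<le> 1 / real p ^ N" "N \<ge> 1"
  shows "av (Sf (x + h) N - Sf x N) \<le> M / real p ^ N"
proof -
  have h1: "av h \<le> 1 / real p"
  proof -
    have "real p ^ 1 \<le> real p ^ N" using h(2) p_gt1 by (intro power_increasing) auto
    then have "1 / real p ^ N \<le> 1 / real p" using p_gt1 by (intro divide_left_mono) auto
    then show ?thesis using h(1) by simp
  qed
  have "Sf (x + h) N - Sf x N = (\<Sum>a<p ^ N. (fL (x + of_nat a + h) - fL (x + of_nat a)) * (-1) ^ a)"
    unfolding Sf_def by (simp add: sum_subtractf[symmetric] algebra_simps)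
  also have "av \<dots> \<le> M / real p ^ N"
  proof (rule av_sum_le)
    fix a assume "a \<in> {..<p ^ N}"
    have "av ((fL (x + of_nat a + h) - fL (x + of_nat a)) * (-1) ^ a) = av (fL (x + of_nat a + h) - fL (x + of_nat a))"
      by (simp add: av_mult av_power)
    also have "\<dots> \<le> M * av h" using M(2) h1 by blast
    also have "\<dots> \<le> M * (1 / real p ^ N)" using M(1) h(1) by (intro mult_left_mono) auto
    finally show "av ((fL (x + of_nat a + h) - fL (x + of_nat a)) * (-1) ^ a) \<le> M / real p ^ N" by simp
  qed (use M p_gt1 in auto)
  finally show ?thesis .
qed

lemma Sf_Suc: "Sf x (Suc N) = (\<Sum>j<p. (-1) ^ j * Sf (x + of_nat (j * p ^ N)) N)"
proof -
  have "Sf x (Suc N) = (\<Sum>a<p * p ^ N. fL (x + of_nat a) * (-1) ^ a)" unfolding Sf_def by simp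
  also have "\<dots> = (\<Sum>j<p. \<Sum>b<p ^ N. fL (x + of_nat (j * p ^ N + b)) * (-1) ^ (j * p ^ N + b))"
    by (rule sum_split_mult)
  also have "\<dots> = (\<Sum>j<p. (-1) ^ j * Sf (x + of_nat (j * p ^ N)) N)"
  proof (rule sum.cong[OF refl])
    fix j
    have pm1: "(-1) ^ (j * p ^ N) = (((-1) ^ (p ^ N)) ^ j :: 'a)" by (metis power_mult mult.commute)
    have pm2: "(-1) ^ (p ^ N) = (-1 :: 'a)" using pN_odd[of N] by simp
    have pm: "(-1) ^ (j * p ^ N) = ((-1) ^ j :: 'a)" using pm1 pm2 by simp
    show "(\<Sum>b<p ^ N. fL (x + of_nat (j * p ^ N + b)) * (-1) ^ (j * p ^ N + b)) = (-1) ^ j * Sf (x + of_nat (j * p ^ N)) N"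
      unfolding Sf_def sum_distrib_left
    proof (rule sum.cong[OF refl])
      fix b
      show "fL (x + of_nat (j * p ^ N + b)) * (-1) ^ (j * p ^ N + b) = (-1) ^ j * (fL (x + of_nat (j * p ^ N) + of_nat b) * (-1) ^ b)"
        using pm by (simp add: power_add add.assoc)
    qed
  qed
  finally show ?thesis .
qed

lemma Sf_conv:
  assumes x: "av x > 1"
  shows "av_conv av (Sf x) (G_pE p av x)"
proof -
  obtain M where M: "M \<ge> 0" "\<forall>a::nat. \<forall>h. av h \<le> 1 / real p \<longrightarrow> av (fL (x + of_nat a + h) - fL (x + of_nat a)) \<le> M * av h"
    using Lip[OF x] by blast
  have "\<exists>L. av_conv av (Sf x) L"
  proof (rule cauchy_succ, intro allI impI)
    fix e :: real assume e: "e > 0"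
    have "(\<lambda>n. M / real p ^ n) \<longlonglongrightarrow> 0" using p_gt1 by (intro LIMSEQ_divide_realpow_zero) simp
    then obtain N0 where N0: "\<forall>n\<ge>N0. norm (M / real p ^ n - 0) < e" using e LIMSEQ_iff by metis
    show "\<exists>N. \<forall>n\<ge>N. av (Sf x (Suc n) - Sf x n) < e"
    proof (intro exI[of _ "max 1 N0"] allI impI)
      fix n assume n: "max 1 N0 \<le> n"
      have "Sf x (Suc n) - Sf x n = (\<Sum>j<p. (-1) ^ j * (Sf (x + of_nat (j * p ^ n)) n - Sf x n))"
        unfolding Sf_Suc using sum_alt_odd[OF odd_p, where 'a='a]
        by (simp add: right_diff_distrib sum_subtractf sum_distrib_right[symmetric])
      also have "av \<dots> \<le> M / real p ^ n"
      proof (rule av_sum_le)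
        fix j assume "j \<in> {..<p}"
        have hb: "av (of_nat (j * p ^ n) :: 'a) \<le> 1 / real p ^ n"
        proof -
          have "av (of_nat (j * p ^ n) :: 'a) = av (of_nat j :: 'a) * (1 / real p ^ n)"
            using av_pn[of n] by (simp add: av_mult)
          also have "\<dots> \<le> 1 * (1 / real p ^ n)" using av_of_nat_le1[of j] by (intro mult_right_mono) auto
          finally show ?thesis by simp
        qed
        have "av ((-1) ^ j * (Sf (x + of_nat (j * p ^ n)) n - Sf x n)) = av (Sf (x + of_nat (j * p ^ n)) n - Sf x n)"
          by (simp add: av_mult av_power)
        also have "\<dots> \<le> M / real p ^ n" using Sf_diff_bound[OF M hb] n by simp
        finally show "av ((-1) ^ j * (Sf (x + of_nat (j * p ^ n)) n - Sf x n)) \<le> M / real p ^ n" .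
      qed (use M p_gt1 in auto)
      also have "\<dots> < e" using N0 n M(1) by auto
      finally show "av (Sf x (Suc n) - Sf x n) < e" .
    qed
  qed
  then obtain L where L: "av_conv av (Sf x) L" by blast
  have "G_pE p av x = av_lim av (Sf x)" unfolding G_pE_def Sf_def fL_def log_p_is ..
  then show ?thesis using av_lim_eq[OF L] L by simp
qed

end

context cp_odd begin

lemma av_shift1: "av x > 1 \<Longrightarrow> av (1 + x) = av x"
  using av_add_eq[of 1 x] by (simp add: add.commute)

lemma fL_shift_conv:
  assumes x: "av x > 1"
  shows "av_conv av (\<lambda>N. fL (x + of_nat (p ^ N))) (fL x)"
proof -
  obtain M where M: "M \<ge> 0" "\<forall>a::nat. \<forall>h. av h \<le> 1 / real p \<longrightarrow> av (fL (x + of_nat a + h) - fL (x + of_nat a)) \<le> M * av h"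
    using Lip[OF x] by blast
  have "av_conv av (\<lambda>N. fL (x + of_nat (p ^ N)) - fL x) 0"
  proof (rule conv_real_null[where N=1])
    show "(\<lambda>n. M / real p ^ n) \<longlonglongrightarrow> 0" using p_gt1 by (intro LIMSEQ_divide_realpow_zero) simp
    show "\<forall>n\<ge>1. av (fL (x + of_nat (p ^ n)) - fL x) \<le> M / real p ^ n"
    proof (intro allI impI)
      fix n :: nat assume n: "n \<ge> 1"
      have h1: "av (of_nat (p ^ n) :: 'a) \<le> 1 / real p"
      proof -
        have "real p ^ 1 \<le> real p ^ n" using n p_gt1 by (intro power_increasing) auto
        then have "1 / real p ^ n \<le> 1 / real p" using p_gt1 by (intro divide_left_mono) auto
        then show ?thesis using av_pn[of n] by simp
      qed
      have "av (fL (x + of_nat 0 + of_nat (p ^ n)) - fL (x + of_nat 0)) \<le> M * av (of_nat (p ^ n) :: 'a)"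
        using M(2) h1 by blast
      then show "av (fL (x + of_nat (p ^ n)) - fL x) \<le> M / real p ^ n" using av_pn[of n] by simp
    qed
  qed
  then show ?thesis using conv_null_iff by blast
qed

lemma G3:
  assumes x: "av x > 1"
  shows "G_pE p av (1 + x) + G_pE p av x = 2 * x * (Lf x - 1)"
proof -
  have x1: "av (1 + x) > 1" using av_shift1[OF x] x by simp
  have eq: "Sf (1 + x) N + Sf x N = fL x + fL (x + of_nat (p ^ N))" for N
  proof -
    define q where "q = p ^ N"
    define g where "g a = fL (x + of_nat a) * (-1) ^ a" for a
    have qo: "odd q" unfolding q_def using pN_odd .
    have S1: "Sf x N = (\<Sum>a<q. g a)" unfolding Sf_def g_def q_def ..
    have S2: "Sf (1 + x) N = - (\<Sum>a<q. g (Suc a))" unfolding Sf_def g_def q_def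
      by (simp add: sum_negf[symmetric] algebra_simps)
    have "(\<Sum>a<Suc q. g a) = g 0 + (\<Sum>a<q. g (Suc a))" by (rule sum.lessThan_Suc_shift)
    moreover have "(\<Sum>a<Suc q. g a) = (\<Sum>a<q. g a) + g q" by simp
    ultimately have "Sf (1 + x) N + Sf x N = g 0 - g q" unfolding S1 S2 by (simp add: algebra_simps)
    also have "\<dots> = fL x + fL (x + of_nat (p ^ N))" unfolding g_def q_def using pN_odd[of N] by simp
    finally show ?thesis .
  qed
  have A: "av_conv av (\<lambda>N. Sf (1 + x) N + Sf x N) (G_pE p av (1 + x) + G_pE p av x)"
    by (rule conv_add[OF Sf_conv[OF x1] Sf_conv[OF x]])
  have B: "av_conv av (\<lambda>N. Sf (1 + x) N + Sf x N) (fL x + fL x)"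
    unfolding eq by (rule conv_add[OF conv_const fL_shift_conv[OF x]])
  have "G_pE p av (1 + x) + G_pE p av x = fL x + fL x" using conv_unique[OF A B] .
  then show ?thesis unfolding fL_def by (simp add: algebra_simps)
qed

lemma G1:
  assumes x: "av x > 1"
  shows "G_pE p av (1 - x) + G_pE p av x = 0"
proof -
  have x1: "av (1 - x) > 1" using av_shift1[of "- x"] x by simp
  obtain M where M: "M \<ge> 0" "\<forall>a::nat. \<forall>h. av h \<le> 1 / real p \<longrightarrow> av (fL (x + of_nat a + h) - fL (x + of_nat a)) \<le> M * av h"
    using Lip[OF x] by blast
  have eq: "Sf (1 - x) N = - Sf (x + - of_nat (p ^ N)) N" for N
  proof -
    define q where "q = p ^ N"
    have qo: "odd q" unfolding q_def using pN_odd .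
    have "Sf (1 - x) N = (\<Sum>a\<in>{0..<q}. fL (1 - x + of_nat a) * (-1) ^ a)" unfolding Sf_def q_def
      by (simp add: atLeast0LessThan)
    also have "\<dots> = (\<Sum>i\<in>{0..<q}. fL (1 - x + of_nat (q - Suc i)) * (-1) ^ (q - Suc i))"
      by (subst sum.atLeastLessThan_rev) simp
    also have "\<dots> = (\<Sum>i\<in>{0..<q}. - (fL (x + - of_nat q + of_nat i) * (-1) ^ i))"
    proof (rule sum.cong[OF refl])
      fix i assume i: "i \<in> {0..<q}"
      have e1: "1 - x + of_nat (q - Suc i) = - (x + - of_nat q + of_nat i :: 'a)"
        using i by (simp add: of_nat_diff)
      have iq: "i < q" using i by simp
      obtain t where t: "q = 2 * t + 1" using qo oddE by blast
      have par: "even (q - Suc i) \<longleftrightarrow> even i" using iq t by presburger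
      have e2: "(-1) ^ (q - Suc i) = ((-1) ^ i :: 'a)" using par by (simp add: minus_one_power_iff)
      show "fL (1 - x + of_nat (q - Suc i)) * (-1) ^ (q - Suc i) = - (fL (x + - of_nat q + of_nat i) * (-1) ^ i)"
        unfolding e1 e2 fL_neg by simp
    qed
    also have "\<dots> = - Sf (x + - of_nat (p ^ N)) N" unfolding Sf_def q_def
      by (simp add: sum_negf atLeast0LessThan)
    finally show ?thesis .
  qed
  have A: "av_conv av (\<lambda>N. Sf (1 - x) N + Sf x N) (G_pE p av (1 - x) + G_pE p av x)"
    by (rule conv_add[OF Sf_conv[OF x1] Sf_conv[OF x]])
  have B: "av_conv av (\<lambda>N. Sf (1 - x) N + Sf x N) 0"
  proof -
    have "av_conv av (\<lambda>N. - (Sf (x + - of_nat (p ^ N)) N - Sf x N)) 0"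
    proof (rule conv_real_null[where N=1])
      show "(\<lambda>n. M / real p ^ n) \<longlonglongrightarrow> 0" using p_gt1 by (intro LIMSEQ_divide_realpow_zero) simp
      show "\<forall>n\<ge>1. av (- (Sf (x + - of_nat (p ^ n)) n - Sf x n)) \<le> M / real p ^ n"
      proof (intro allI impI)
        fix n :: nat assume n: "n \<ge> 1"
        have hb: "av (- of_nat (p ^ n) :: 'a) \<le> 1 / real p ^ n" using av_pn[of n] by simp
        have "av (Sf (x + - of_nat (p ^ n)) n - Sf x n) \<le> M / real p ^ n" by (rule Sf_diff_bound[OF M hb n])
        then show "av (- (Sf (x + - of_nat (p ^ n)) n - Sf x n)) \<le> M / real p ^ n"
          by (simp only: av_uminus)
      qed
    qed
    then show ?thesis unfolding eq by simp
  qed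
  show ?thesis using conv_unique[OF A B] .
qed

lemma G2:
  assumes x: "av x > 1"
  shows "G_pE p av x - G_pE p av (- x) = 2 * x * (Lf x - 1)"
proof -
  have x1: "av (1 + x) > 1" using av_shift1[OF x] x by simp
  have "G_pE p av (1 - (1 + x)) + G_pE p av (1 + x) = 0" by (rule G1[OF x1])
  then have "G_pE p av (- x) = - G_pE p av (1 + x)" by (simp add: eq_neg_iff_add_eq_0)
  then show ?thesis using G3[OF x] by (simp add: algebra_simps)
qed

end

theorem proposition4p1:
  fixes p :: nat and av :: "'a::field_char_0 \<Rightarrow> real"
  assumes "is_Cp p av" and "odd p"
  shows "\<forall>x. av x > 1 \<longrightarrow>
           G_pE p av (1 - x) + G_pE p av x = 0 \<and>
           G_pE p av x - G_pE p av (- x) = 2 * x * (log_p p av x - 1) \<and>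
           G_pE p av (1 + x) + G_pE p av x = 2 * x * (log_p p av x - 1)"
proof -
  interpret cp_odd p av
    using assms by (unfold_locales) (auto simp: cp_def)
  show ?thesis unfolding log_p_is using G1 G2 G3 by blast
qed

end
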